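(* For any sign string and state string, the web produced by the growth algorithm is non-elliptic, i.e. it contains no closed loops and every internal face has at least six sides.
   Context: A sign string is $S=(s_1,\dots,s_n)\in\{+,-\}^n$ and a state string is $J=(j_1,\dots,j_n)\in\{-1,0,1\}^n$. The growth algorithm builds an oriented planar graph downward from $n$ parallel strands (the $k$-th strand oriented upward toward its top endpoint if $s_k=+$ and downward if $s_k=-$), keeping a current pair (sign string, state string) describing the strands hanging at the bottom. A replacement acts on two adjacent positions $k,k+1$ with current signs $(s,s')$ and states $(j,j')$: (a) If $s'\ne s$: if $(j,j')=(1,0)$, $(0,0)$ or $(0,-1)$, attach an "H" (two trivalent vertices joined by a horizontal edge, the left vertex joined to strand $k$ above and to a new strand below, the right vertex likewise for strand $k+1$); the new signs at positions $k,k+1$ are $(s',s)$ and the new states are respectively $(0,1)$, $(-1,1)$, $(-1,0)$. If $(j,j')=(1,-1)$, join the two strands by a cup and delete both positions. (b) If $s'=s$: if $(j,j')=(1,0)$, $(0,-1)$ or $(1,-1)$, attach a "Y" (the two strands meet at a trivalent vertex whose third edge continues downward as a single strand); the two positions are replaced by one position with sign opposite to $s$ and state respectively $1$, $-1$, $0$. The algorithm repeatedly applies some applicable replacement and stops when none applies. An internal face of the resulting graph is a bounded complementary region not touching the top line of endpoints or the strands left hanging at the bottom. *)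

theory Defs
  imports Main
begin

text \<open>Vertices of the produced web (drawn in a rectangle/disk):
  Top i   -- the i-th top endpoint (0-indexed, left to right),
  Bot i   -- the endpoint of the i-th strand left hanging at the bottom,
  Tri m   -- a trivalent vertex (created by an H or a Y),
  Cp m    -- the bottom point of a cup (a bivalent point, not a web vertex;
             it only serves to make cups representable as a pair of segments).
  A dart is a pair (vertex, slot); slots are numbered in counterclockwise order
  around the vertex, which gives the planar embedding as a rotation system.\<close>

datatype vtx = Top nat | Bot nat | Tri nat | Cp nat

type_synonym dart = "vtx \<times> nat"

text \<open>Algorithm state: the list of hanging strands (sign, state, upper dart from
  which the strand hangs), a counter for fresh vertex names, and the edges built so
  far (pairs of darts).  Sign True means +.\<close>

type_synonym gstate = "(bool \<times> int \<times> dart) list \<times> nat \<times> (dart \<times> dart) set"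

text \<open>Slot conventions (counterclockwise):
  H left vertex Tri c: 0 = up (strand k), 1 = down (new strand), 2 = right (horizontal edge);
  H right vertex Tri (c+1): 0 = up (strand k+1), 1 = left (horizontal edge), 2 = down;
  Y vertex Tri c: 0 = upper left (strand k), 1 = down, 2 = upper right (strand k+1);
  cup point Cp c: 0 = left (strand k), 1 = right (strand k+1);
  Top i: 0 = down (strand), 1 = boundary arc to the right, 2 = boundary arc to the left;
  Bot i: 0 = up (strand), 1 = boundary arc to the left, 2 = boundary arc to the right.\<close>

inductive grow_step :: "gstate \<Rightarrow> gstate \<Rightarrow> bool" where
  H: "\<lbrakk> Suc k < length L; L ! k = (s, j, d); L ! Suc k = (s', j', d'); s' \<noteq> s;
        ((j, j'), (nj, nj')) \<in> {((1, 0), (0, 1)), ((0, 0), (-1, 1)), ((0, -1), (-1, 0))} \<rbrakk>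
      \<Longrightarrow> grow_step (L, c, E)
            (take k L @ [(s', nj, (Tri c, 1)), (s, nj', (Tri (Suc c), 2))] @ drop (Suc (Suc k)) L,
             Suc (Suc c),
             E \<union> {(d, (Tri c, 0)), (d', (Tri (Suc c), 0)), ((Tri c, 2), (Tri (Suc c), 1))})"
| Cup: "\<lbrakk> Suc k < length L; L ! k = (s, 1, d); L ! Suc k = (s', -1, d'); s' \<noteq> s \<rbrakk>
      \<Longrightarrow> grow_step (L, c, E)
            (take k L @ drop (Suc (Suc k)) L, Suc c, E \<union> {(d, (Cp c, 0)), (d', (Cp c, 1))})"
| Y: "\<lbrakk> Suc k < length L; L ! k = (s, j, d); L ! Suc k = (s, j', d');
        ((j, j'), nj) \<in> {((1, 0), 1), ((0, -1), -1), ((1, -1), 0)} \<rbrakk>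
      \<Longrightarrow> grow_step (L, c, E)
            (take k L @ [(\<not> s, nj, (Tri c, 1))] @ drop (Suc (Suc k)) L,
             Suc c,
             E \<union> {(d, (Tri c, 0)), (d', (Tri c, 2))})"

definition grow_init :: "bool list \<Rightarrow> int list \<Rightarrow> gstate" where
  "grow_init S J = (map (\<lambda>i. (S ! i, J ! i, (Top i, 0))) [0..<length S], 0, {})"

definition grow_terminal :: "gstate \<Rightarrow> bool" where
  "grow_terminal st \<longleftrightarrow> \<not> (\<exists>st'. grow_step st st')"

text \<open>Boundary circle of the disk: top endpoints left to right, then down the right
  side, bottom endpoints right to left, then up the left side.\<close>

definition boundary_arcs :: "nat \<Rightarrow> nat \<Rightarrow> (dart \<times> dart) set" where
  "boundary_arcs n m =
     {((Top i, 1), (Top (Suc i), 2)) | i. Suc i < n}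
   \<union> {((Bot (Suc i), 1), (Bot i, 2)) | i. Suc i < m}
   \<union> (if 0 < m then {((Top (n - 1), 1), (Bot (m - 1), 2)), ((Bot 0, 1), (Top 0, 2))}
      else if 0 < n then {((Top (n - 1), 1), (Top 0, 2))} else {})"

definition final_web :: "nat \<Rightarrow> gstate \<Rightarrow> (dart \<times> dart) set" where
  "final_web n st = (case st of (L, c, E) \<Rightarrow>
     E \<union> {(snd (snd (L ! i)), (Bot i, 0)) | i. i < length L} \<union> boundary_arcs n (length L))"

definition web_darts :: "(dart \<times> dart) set \<Rightarrow> dart set" where
  "web_darts W = fst ` W \<union> snd ` W"

definition alpha :: "(dart \<times> dart) set \<Rightarrow> dart \<Rightarrow> dart" where
  "alpha W d = (THE e. (d, e) \<in> W \<or> (e, d) \<in> W)"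

fun rot :: "dart \<Rightarrow> dart" where
  "rot (Cp m, i) = (Cp m, (Suc i) mod 2)"
| "rot (v, i) = (v, (Suc i) mod 3)"

definition phi :: "(dart \<times> dart) set \<Rightarrow> dart \<Rightarrow> dart" where
  "phi W d = rot (alpha W d)"

text \<open>The face containing a dart: its orbit under the face permutation; each element
  of the orbit corresponds to one corner of the face.\<close>

definition face :: "(dart \<times> dart) set \<Rightarrow> dart \<Rightarrow> dart set" where
  "face W d = {(phi W ^^ k) d | k. True}"

fun is_tri :: "vtx \<Rightarrow> bool" where
  "is_tri (Tri _) = True"
| "is_tri _ = False"

fun is_cp :: "vtx \<Rightarrow> bool" where
  "is_cp (Cp _) = True"
| "is_cp _ = False"

text \<open>Internal face: has no corner at a top endpoint or a bottom endpoint (equivalently,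
  does not touch the boundary circle).\<close>

definition internal_face :: "dart set \<Rightarrow> bool" where
  "internal_face F \<longleftrightarrow> (\<forall>d\<in>F. is_tri (fst d) \<or> is_cp (fst d))"

text \<open>Number of sides = number of corners at (trivalent) web vertices; cup points are
  interior points of edges and do not count.\<close>

definition face_sides :: "dart set \<Rightarrow> nat" where
  "face_sides F = card {d \<in> F. is_tri (fst d)}"

definition web_adj :: "(dart \<times> dart) set \<Rightarrow> vtx \<Rightarrow> vtx \<Rightarrow> bool" where
  "web_adj W v w \<longleftrightarrow> (\<exists>i j. ((v, i), (w, j)) \<in> W \<or> ((w, j), (v, i)) \<in> W)"

text \<open>A closed loop is a connected component without any vertex (all of its points are
  interior points of edges, here: cup points).\<close>

definition no_closed_loops :: "(dart \<times> dart) set \<Rightarrow> bool" where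
  "no_closed_loops W \<longleftrightarrow>
     (\<forall>v \<in> fst ` web_darts W. \<exists>w. (web_adj W)\<^sup>*\<^sup>* v w \<and> \<not> is_cp w)"

definition non_elliptic :: "(dart \<times> dart) set \<Rightarrow> bool" where
  "non_elliptic W \<longleftrightarrow> no_closed_loops W \<and>
     (\<forall>d \<in> web_darts W. internal_face (face W d) \<longrightarrow> 6 \<le> face_sides (face W d))"

end

theory Submission
  imports Defs
begin


definition adj :: "(dart \<times> dart) set \<Rightarrow> dart \<Rightarrow> dart \<Rightarrow> bool" where
  "adj E x y \<longleftrightarrow> (x, y) \<in> E \<or> (y, x) \<in> E"

definition mt :: "(dart \<times> dart) set \<Rightarrow> dart \<Rightarrow> bool" where
  "mt E x \<longleftrightarrow> (\<exists>y. adj E x y)"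

definition uniq :: "(dart \<times> dart) set \<Rightarrow> bool" where
  "uniq E \<longleftrightarrow> (\<forall>x y z. adj E x y \<longrightarrow> adj E x z \<longrightarrow> y = z)"

definition tc :: "vtx \<Rightarrow> bool" where
  "tc v \<longleftrightarrow> is_tri v \<or> is_cp v"

fun valid :: "dart \<Rightarrow> bool" where
  "valid (Cp m, i) = (i < 2)"
| "valid (v, i) = (i < 3)"

fun fresh :: "nat \<Rightarrow> dart \<Rightarrow> bool" where
  "fresh c (Tri m, i) = (m < c)"
| "fresh c (Cp m, i) = (m < c)"
| "fresh c _ = True"

definition hd' :: "(bool \<times> int \<times> dart) list \<Rightarrow> nat \<Rightarrow> dart" where
  "hd' L j = snd (snd (L ! j))"

definition sg :: "(bool \<times> int \<times> dart) list \<Rightarrow> nat \<Rightarrow> bool" where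
  "sg L j = fst (L ! j)"

definition sv :: "(bool \<times> int \<times> dart) list \<Rightarrow> nat \<Rightarrow> int" where
  "sv L j = fst (snd (L ! j))"

definition gf :: "bool \<Rightarrow> int \<Rightarrow> nat" where
  "gf same e = (if same then (if e \<le> 0 then 3 else 5) else (if e < 0 then 2 else if e \<le> 1 then 4 else 6))"

definition cnt :: "(dart \<Rightarrow> dart) \<Rightarrow> dart \<Rightarrow> nat \<Rightarrow> nat" where
  "cnt p x m = (\<Sum>i\<le>m. if is_tri (fst ((p ^^ i) x)) then 1 else 0)"

definition region :: "(dart \<times> dart) set \<Rightarrow> (bool \<times> int \<times> dart) list \<Rightarrow> nat \<Rightarrow> bool" where
  "region E L j \<longleftrightarrow> (\<exists>m. (\<forall>i<m. mt E ((phi E ^^ i) (rot (hd' L j)))) \<and>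
      (\<not> tc (fst ((phi E ^^ m) (rot (hd' L j)))) \<or>
       (Suc j < length L \<and> (phi E ^^ m) (rot (hd' L j)) = hd' L (Suc j) \<and>
        gf (sg L j = sg L (Suc j)) (sv L j - sv L (Suc j)) \<le> cnt (phi E) (rot (hd' L j)) m)))"

definition orb :: "(dart \<Rightarrow> dart) \<Rightarrow> dart \<Rightarrow> dart set" where
  "orb p x = {(p ^^ k) x | k. True}"

definition allgood :: "(dart \<times> dart) set \<Rightarrow> dart \<Rightarrow> bool" where
  "allgood E x \<longleftrightarrow> (\<forall>k. mt E ((phi E ^^ k) x) \<and> tc (fst ((phi E ^^ k) x)))"

definition closed_good :: "(dart \<times> dart) set \<Rightarrow> bool" where
  "closed_good E \<longleftrightarrow> (\<forall>x. allgood E x \<longrightarrow> 6 \<le> card {y \<in> orb (phi E) x. is_tri (fst y)})"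

lemma adj_sym: "adj E x y = adj E y x" by (auto simp: adj_def)

lemma alpha_eq: "uniq E \<Longrightarrow> adj E x y \<Longrightarrow> alpha E x = y"
proof -
  assume u: "uniq E" and a: "adj E x y"
  have "(THE e. adj E x e) = y"
  proof (rule the_equality)
    show "adj E x y" by (rule a)
    fix e assume "adj E x e" then show "e = y" using u a unfolding uniq_def by blast
  qed
  then show ?thesis unfolding alpha_def adj_def .
qed

lemma uniq_mono: "uniq E' \<Longrightarrow> E \<subseteq> E' \<Longrightarrow> uniq E"
  unfolding uniq_def adj_def by blast

lemma mt_mono: "mt E x \<Longrightarrow> E \<subseteq> E' \<Longrightarrow> mt E' x"
  unfolding mt_def adj_def by blast

lemma phi_eq: "uniq E' \<Longrightarrow> E \<subseteq> E' \<Longrightarrow> mt E y \<Longrightarrow> phi E' y = phi E y"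
proof -
  assume u: "uniq E'" and s: "E \<subseteq> E'" and m: "mt E y"
  then obtain z where z: "adj E y z" unfolding mt_def by blast
  have "alpha E y = z" using alpha_eq[OF uniq_mono[OF u s] z] .
  moreover have "alpha E' y = z" using alpha_eq[OF u] z s unfolding adj_def by blast
  ultimately show ?thesis unfolding phi_def by simp
qed

lemma agree:
  assumes "uniq E'" "E \<subseteq> E'" "\<forall>i<m. mt E ((phi E ^^ i) x)" "i \<le> m"
  shows "(phi E' ^^ i) x = (phi E ^^ i) x"
  using assms(4)
proof (induction i)
  case 0 then show ?case by simp
next
  case (Suc i)
  then have "(phi E' ^^ i) x = (phi E ^^ i) x" by simp
  moreover have "mt E ((phi E ^^ i) x)" using assms(3) Suc.prems by simp
  ultimately show ?case using phi_eq[OF assms(1,2)] by simp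
qed

lemma cnt_cong:
  assumes "\<And>i. i \<le> m \<Longrightarrow> (p ^^ i) x = (q ^^ i) x"
  shows "cnt p x m = cnt q x m"
  unfolding cnt_def using assms by (intro sum.cong) auto

lemma cnt_split: "cnt p x (a + Suc b) = cnt p x a + cnt p ((p ^^ Suc a) x) b"
proof -
  have "cnt p x (a + Suc b) = (\<Sum>i\<le>a. if is_tri (fst ((p ^^ i) x)) then 1 else 0)
        + (\<Sum>i = Suc a..a + Suc b. if is_tri (fst ((p ^^ i) x)) then 1 else 0)"
    unfolding cnt_def by (rule sum_up_index_split)
  also have "(\<Sum>i = Suc a..a + Suc b. if is_tri (fst ((p ^^ i) x)) then 1 else (0::nat))
      = (\<Sum>i\<le>b. if is_tri (fst ((p ^^ (i + Suc a)) x)) then 1 else 0)"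
  proof -
    have "(\<Sum>i = Suc a..a + Suc b. if is_tri (fst ((p ^^ i) x)) then 1 else (0::nat))
        = (\<Sum>i = 0 + Suc a..b + Suc a. if is_tri (fst ((p ^^ i) x)) then 1 else (0::nat))"
      by (simp add: add.commute)
    also have "\<dots> = (\<Sum>i = 0..b. if is_tri (fst ((p ^^ (i + Suc a)) x)) then 1 else 0)"
      by (rule sum.shift_bounds_cl_nat_ivl)
    finally show ?thesis by (simp add: atLeast0AtMost)
  qed
  finally show ?thesis unfolding cnt_def by (simp only: funpow_add o_apply)
qed

lemma cnt_Suc: "cnt p x (Suc m) = cnt p x m + (if is_tri (fst ((p ^^ Suc m) x)) then 1 else 0)"
  unfolding cnt_def by simp

lemma cnt_0: "cnt p x 0 = (if is_tri (fst x) then 1 else 0)"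
  unfolding cnt_def by simp

lemma cnt_shift: "cnt p x (Suc m) = (if is_tri (fst x) then 1 else 0) + cnt p (p x) m"
  using cnt_split[of p x 0 m] by (simp add: cnt_0)



lemma three_cases: "(i::nat) < 3 \<Longrightarrow> i = 0 \<or> i = 1 \<or> i = 2" by linarith
lemma mod3_inj: "(i::nat) < 3 \<Longrightarrow> j < 3 \<Longrightarrow> Suc i mod 3 = Suc j mod 3 \<Longrightarrow> i = j"
  by (drule three_cases, drule three_cases, elim disjE) simp_all
lemma mod2_inj: "(i::nat) < 2 \<Longrightarrow> j < 2 \<Longrightarrow> Suc i mod 2 = Suc j mod 2 \<Longrightarrow> i = j"
  by presburger

lemma rot_inj: "valid a \<Longrightarrow> valid b \<Longrightarrow> rot a = rot b \<Longrightarrow> a = b"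
proof -
  assume va: "valid a" and vb: "valid b" and r: "rot a = rot b"
  obtain v i w j where ab: "a = (v, i)" "b = (w, j)" by (cases a, cases b)
  show "a = b"
  proof (cases v)
    case (Cp m)
    then show ?thesis using va vb r ab by (cases w) (auto intro: mod2_inj)
  next
    case (Top m)
    then show ?thesis using va vb r ab by (cases w) (auto intro: mod3_inj)
  next
    case (Bot m)
    then show ?thesis using va vb r ab by (cases w) (auto intro: mod3_inj)
  next
    case (Tri m)
    then show ?thesis using va vb r ab by (cases w) (auto intro: mod3_inj)
  qed
qed

lemma mt_valid_inj:
  assumes u: "uniq E" and v: "\<forall>x. mt E x \<longrightarrow> valid x"
  shows "inj_on (phi E) {x. mt E x}"
proof (rule inj_onI)
  fix x y assume x: "x \<in> {x. mt E x}" and y: "y \<in> {x. mt E x}" and e: "phi E x = phi E y"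
  obtain x' where x': "adj E x x'" using x unfolding mt_def by blast
  obtain y' where y': "adj E y y'" using y unfolding mt_def by blast
  have ax: "alpha E x = x'" by (rule alpha_eq[OF u x'])
  have ay: "alpha E y = y'" by (rule alpha_eq[OF u y'])
  have "valid x'" "valid y'" using v x' y' unfolding mt_def by (meson adj_sym)+
  then have "x' = y'" using e ax ay rot_inj unfolding phi_def by metis
  then show "x = y" using x' y' u unfolding uniq_def by (metis adj_sym)
qed

lemma funpow_cancel:
  assumes "inj_on p A" "\<forall>i<a. (p ^^ i) x \<in> A" "\<forall>i<a. (p ^^ i) y \<in> A" "(p ^^ a) x = (p ^^ a) y"
  shows "x = y"
  using assms(2-4)
proof (induction a arbitrary: x y)
  case 0 then show ?case by simp
next
  case (Suc a)
  have "p x = p y"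
  proof (rule Suc.IH)
    show "\<forall>i<a. (p ^^ i) (p x) \<in> A" using Suc.prems(1) by (auto simp: funpow_Suc_right simp del: funpow.simps)
    show "\<forall>i<a. (p ^^ i) (p y) \<in> A" using Suc.prems(2) by (auto simp: funpow_Suc_right simp del: funpow.simps)
    show "(p ^^ a) (p x) = (p ^^ a) (p y)" using Suc.prems(3) by (simp add: funpow_Suc_right del: funpow.simps)
  qed
  moreover have "x \<in> A" "y \<in> A" using Suc.prems(1)[rule_format, of 0] Suc.prems(2)[rule_format, of 0] by auto
  ultimately show ?case using assms(1) by (auto dest: inj_onD)
qed

lemma cycle_inj:
  assumes inj: "inj_on p A" and inA: "\<forall>i<N. (p ^^ i) x \<in> A"
    and nr: "\<forall>q. 0 < q \<longrightarrow> q < N \<longrightarrow> (p ^^ q) x \<noteq> x"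
  shows "inj_on (\<lambda>i. (p ^^ i) x) {..<N}"
proof (rule inj_onI)
  fix a b assume a: "a \<in> {..<N}" and b: "b \<in> {..<N}" and e: "(p ^^ a) x = (p ^^ b) x"
  show "a = b"
  proof (rule ccontr)
    assume "a \<noteq> b"
    then consider "a < b" | "b < a" by linarith
    then show False
    proof cases
      case 1
      have "x = (p ^^ (b - a)) x"
      proof (rule funpow_cancel[OF inj])
        show "\<forall>i<a. (p ^^ i) x \<in> A" using inA a by auto
        show "\<forall>i<a. (p ^^ i) ((p ^^ (b - a)) x) \<in> A"
        proof (intro allI impI)
          fix i assume "i < a"
          then have "(p ^^ i) ((p ^^ (b - a)) x) = (p ^^ (i + (b - a))) x" by (simp add: funpow_add)
          moreover have "i + (b - a) < N" using \<open>i < a\<close> 1 b by auto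
          ultimately show "(p ^^ i) ((p ^^ (b - a)) x) \<in> A" using inA by auto
        qed
        show "(p ^^ a) x = (p ^^ a) ((p ^^ (b - a)) x)"
        proof -
          have "(p ^^ a) ((p ^^ (b - a)) x) = (p ^^ (a + (b - a))) x" by (simp add: funpow_add)
          then show ?thesis using e 1 by simp
        qed
      qed
      moreover have "0 < b - a" "b - a < N" using 1 b by auto
      ultimately show False using nr by metis
    next
      case 2
      have "x = (p ^^ (a - b)) x"
      proof (rule funpow_cancel[OF inj])
        show "\<forall>i<b. (p ^^ i) x \<in> A" using inA b by auto
        show "\<forall>i<b. (p ^^ i) ((p ^^ (a - b)) x) \<in> A"
        proof (intro allI impI)
          fix i assume "i < b"
          then have "(p ^^ i) ((p ^^ (a - b)) x) = (p ^^ (i + (a - b))) x" by (simp add: funpow_add)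
          moreover have "i + (a - b) < N" using \<open>i < b\<close> 2 a by auto
          ultimately show "(p ^^ i) ((p ^^ (a - b)) x) \<in> A" using inA by auto
        qed
        show "(p ^^ b) x = (p ^^ b) ((p ^^ (a - b)) x)"
        proof -
          have "(p ^^ b) ((p ^^ (a - b)) x) = (p ^^ (b + (a - b))) x" by (simp add: funpow_add)
          then show ?thesis using e 2 by simp
        qed
      qed
      moreover have "0 < a - b" "a - b < N" using 2 a by auto
      ultimately show False using nr by metis
    qed
  qed
qed

lemma cnt_card: "cnt p x m = card {i. i \<le> m \<and> is_tri (fst ((p ^^ i) x))}"
proof (induction m)
  case 0
  have "{i. i \<le> 0 \<and> is_tri (fst ((p ^^ i) x))} = (if is_tri (fst x) then {0} else {})" by auto
  then show ?case by (simp add: cnt_0)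
next
  case (Suc m)
  have "{i. i \<le> Suc m \<and> is_tri (fst ((p ^^ i) x))} =
        {i. i \<le> m \<and> is_tri (fst ((p ^^ i) x))} \<union> (if is_tri (fst ((p ^^ Suc m) x)) then {Suc m} else {})"
    by (auto simp: le_Suc_eq)
  then show ?case using Suc by (simp add: cnt_Suc del: funpow.simps)
qed

lemma orb_finite:
  assumes "allgood E x" "finite E"
  shows "finite (orb (phi E) x)"
proof -
  have "orb (phi E) x \<subseteq> fst ` E \<union> snd ` E"
    using assms(1) unfolding orb_def allgood_def mt_def adj_def by force
  then show ?thesis using assms(2) by (meson finite_Un finite_imageI finite_subset)
qed

lemma cycle_count:
  assumes u: "uniq E" and v: "\<forall>x. mt E x \<longrightarrow> valid x" and fin: "finite E"
    and ag: "allgood E x" and cyc: "(phi E ^^ Suc n) x = x"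
    and nr: "\<forall>q. 0 < q \<longrightarrow> q \<le> n \<longrightarrow> (phi E ^^ q) x \<noteq> x"
  shows "cnt (phi E) x n \<le> card {y \<in> orb (phi E) x. is_tri (fst y)}"
proof -
  let ?p = "phi E"
  have inj: "inj_on (\<lambda>i. (?p ^^ i) x) {..<Suc n}"
    by (rule cycle_inj[OF mt_valid_inj[OF u v]]) (use ag nr in \<open>auto simp: allgood_def\<close>)
  let ?I = "{i. i \<le> n \<and> is_tri (fst ((?p ^^ i) x))}"
  have "card ?I = card ((\<lambda>i. (?p ^^ i) x) ` ?I)"
    by (rule card_image[symmetric]) (rule inj_on_subset[OF inj], auto)
  also have "\<dots> \<le> card {y \<in> orb ?p x. is_tri (fst y)}"
    by (rule card_mono) (use orb_finite[OF ag fin] in \<open>auto simp: orb_def\<close>)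
  finally show ?thesis by (simp add: cnt_card)
qed



definition Inv :: "(bool \<times> int \<times> dart) list \<Rightarrow> nat \<Rightarrow> (dart \<times> dart) set \<Rightarrow> bool" where
  "Inv L c E \<longleftrightarrow>
   finite E \<and> uniq E \<and>
   (\<forall>i<length L. \<not> mt E (hd' L i)) \<and>
   (\<forall>i<length L. \<forall>j<length L. hd' L i = hd' L j \<longrightarrow> i = j) \<and>
   (\<forall>x. mt E x \<longrightarrow> fresh c x \<and> valid x) \<and>
   (\<forall>i<length L. fresh c (hd' L i) \<and> valid (hd' L i) \<and> \<not> is_cp (fst (hd' L i))) \<and>
   (\<forall>x. (mt E x \<or> (\<exists>i<length L. x = hd' L i)) \<longrightarrow> tc (fst x) \<longrightarrow> mt E (rot x) \<or> (\<exists>i<length L. rot x = hd' L i)) \<and>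
   (\<forall>i<length L. sv L i \<in> {-1, 0, 1}) \<and>
   (\<forall>(a, b)\<in>E. \<not> is_cp (fst a)) \<and>
   (\<forall>i<length L. region E L i) \<and>
   closed_good E"

lemma fp: "(p ^^ a) ((p ^^ b) x) = (p ^^ (a + b)) x" by (simp add: funpow_add)

lemma mt_insert: "mt (insert (a, b) E) x \<longleftrightarrow> mt E x \<or> x = a \<or> x = b"
  unfolding mt_def adj_def by blast

lemma adj_insert: "adj (insert (a, b) E) x y \<longleftrightarrow> adj E x y \<or> (x = a \<and> y = b) \<or> (x = b \<and> y = a)"
  unfolding adj_def by auto

lemma uniq_add:
  assumes "uniq E" "\<not> mt E a" "\<not> mt E b" "a \<noteq> b"
  shows "uniq (insert (a, b) E)"
  using assms unfolding uniq_def adj_insert mt_def by (metis adj_sym)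

lemma phi_adj: "uniq E \<Longrightarrow> adj E x y \<Longrightarrow> phi E x = rot y"
  unfolding phi_def by (simp add: alpha_eq)

lemma allgood_shift:
  assumes "allgood E x" shows "allgood E ((phi E ^^ k) x)"
  using assms unfolding allgood_def fp by blast

lemma orb_shift: "orb p ((p ^^ k) x) \<subseteq> orb p x"
  unfolding orb_def fp by blast

lemma card_shift:
  assumes "allgood E x" "finite E"
  shows "card {y \<in> orb (phi E) ((phi E ^^ k) x). is_tri (fst y)} \<le> card {y \<in> orb (phi E) x. is_tri (fst y)}"
  by (rule card_mono) (use orb_finite[OF assms] orb_shift[of "phi E" k x] in auto)

lemma good_shift:
  assumes "allgood E x" "finite E" "allgood E ((phi E ^^ k) x) \<Longrightarrow> 6 \<le> card {y \<in> orb (phi E) ((phi E ^^ k) x). is_tri (fst y)}"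
  shows "6 \<le> card {y \<in> orb (phi E) x. is_tri (fst y)}"
  using assms card_shift[OF assms(1,2), of k] allgood_shift[OF assms(1), of k] by linarith

lemma closed_good_step:
  assumes cg: "closed_good E" and sub: "E \<subseteq> E'" and u: "uniq E'" and fin: "finite E'"
    and new: "\<And>x. mt E' x \<Longrightarrow> \<not> mt E x \<Longrightarrow> allgood E' x \<Longrightarrow> 6 \<le> card {y \<in> orb (phi E') x. is_tri (fst y)}"
  shows "closed_good E'"
  unfolding closed_good_def
proof (intro allI impI)
  fix x assume ag: "allgood E' x"
  show "6 \<le> card {y \<in> orb (phi E') x. is_tri (fst y)}"
  proof (cases "\<forall>k. mt E ((phi E' ^^ k) x)")
    case True
    have eq: "(phi E' ^^ k) x = (phi E ^^ k) x" for k
    proof (induction k)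
      case 0 then show ?case by simp
    next
      case (Suc k)
      have "mt E ((phi E' ^^ k) x)" using True by blast
      then show ?case using Suc phi_eq[OF u sub] by simp
    qed
    have "allgood E x" using ag True unfolding allgood_def eq by simp
    then have "6 \<le> card {y \<in> orb (phi E) x. is_tri (fst y)}" using cg unfolding closed_good_def by blast
    moreover have "orb (phi E') x = orb (phi E) x" unfolding orb_def eq ..
    ultimately show ?thesis by simp
  next
    case False
    then obtain k where k: "\<not> mt E ((phi E' ^^ k) x)" by blast
    show ?thesis
    proof (rule good_shift[OF ag fin, of k])
      assume ag2: "allgood E' ((phi E' ^^ k) x)"
      then have "mt E' ((phi E' ^^ k) x)" unfolding allgood_def by (metis funpow_0)
      then show "6 \<le> card {y \<in> orb (phi E') ((phi E' ^^ k) x). is_tri (fst y)}"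
        using new k ag2 by blast
    qed
  qed
qed

lemma region_transfer:
  assumes r: "region E L j" and sub: "E \<subseteq> E'" and u: "uniq E'"
    and e: "L' ! j' = L ! j"
    and s: "Suc j < length L \<Longrightarrow> Suc j' < length L' \<and> L' ! Suc j' = L ! Suc j"
  shows "region E' L' j'"
proof -
  let ?x = "rot (hd' L j)"
  obtain m where m1: "\<forall>i<m. mt E ((phi E ^^ i) ?x)"
    and m2: "\<not> tc (fst ((phi E ^^ m) ?x)) \<or>
       (Suc j < length L \<and> (phi E ^^ m) ?x = hd' L (Suc j) \<and>
        gf (sg L j = sg L (Suc j)) (sv L j - sv L (Suc j)) \<le> cnt (phi E) ?x m)"
    using r unfolding region_def by blast
  have hx: "rot (hd' L' j') = ?x" using e by (simp add: hd'_def)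
  have ag: "(phi E' ^^ i) ?x = (phi E ^^ i) ?x" if "i \<le> m" for i
    using agree[OF u sub m1 that] .
  have c: "cnt (phi E') ?x m = cnt (phi E) ?x m" by (rule cnt_cong) (rule ag)
  have m1': "\<forall>i<m. mt E' ((phi E' ^^ i) ?x)" using m1 ag mt_mono[OF _ sub] by simp
  from m2 show ?thesis
  proof
    assume "\<not> tc (fst ((phi E ^^ m) ?x))"
    then show ?thesis unfolding region_def hx using m1' ag[of m] by auto
  next
    assume h: "Suc j < length L \<and> (phi E ^^ m) ?x = hd' L (Suc j) \<and>
        gf (sg L j = sg L (Suc j)) (sv L j - sv L (Suc j)) \<le> cnt (phi E) ?x m"
    then have s': "Suc j' < length L'" "L' ! Suc j' = L ! Suc j" using s by auto
    show ?thesis unfolding region_def hx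
      using m1' ag[of m] h s' e c by (auto simp: hd'_def sg_def sv_def)
  qed
qed

lemma region_extend:
  assumes r: "region E L j" and sj: "Suc j < length L" and sub: "E \<subseteq> E'" and u: "uniq E'"
    and mtd: "mt E' (hd' L (Suc j))" and ph: "phi E' (hd' L (Suc j)) = hd' L' (Suc j)"
    and tri: "is_tri (fst (hd' L' (Suc j)))" and e: "L' ! j = L ! j" and sj': "Suc j < length L'"
    and g: "gf (sg L' j = sg L' (Suc j)) (sv L' j - sv L' (Suc j)) \<le> gf (sg L j = sg L (Suc j)) (sv L j - sv L (Suc j)) + 1"
  shows "region E' L' j"
proof -
  let ?x = "rot (hd' L j)"
  obtain m where m1: "\<forall>i<m. mt E ((phi E ^^ i) ?x)"
    and m2: "\<not> tc (fst ((phi E ^^ m) ?x)) \<or>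
       (Suc j < length L \<and> (phi E ^^ m) ?x = hd' L (Suc j) \<and>
        gf (sg L j = sg L (Suc j)) (sv L j - sv L (Suc j)) \<le> cnt (phi E) ?x m)"
    using r unfolding region_def by blast
  have hx: "rot (hd' L' j) = ?x" using e by (simp add: hd'_def)
  have ag: "(phi E' ^^ i) ?x = (phi E ^^ i) ?x" if "i \<le> m" for i
    using agree[OF u sub m1 that] .
  have c: "cnt (phi E') ?x m = cnt (phi E) ?x m" by (rule cnt_cong) (rule ag)
  have m1': "\<forall>i<m. mt E' ((phi E' ^^ i) ?x)" using m1 ag mt_mono[OF _ sub] by simp
  from m2 show ?thesis
  proof
    assume "\<not> tc (fst ((phi E ^^ m) ?x))"
    then show ?thesis unfolding region_def hx using m1' ag[of m] by auto
  next
    assume h: "Suc j < length L \<and> (phi E ^^ m) ?x = hd' L (Suc j) \<and>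
        gf (sg L j = sg L (Suc j)) (sv L j - sv L (Suc j)) \<le> cnt (phi E) ?x m"
    have pm: "(phi E' ^^ m) ?x = hd' L (Suc j)" using h ag[of m] by simp
    have pm1: "(phi E' ^^ Suc m) ?x = hd' L' (Suc j)" using pm ph by simp
    have m1'': "\<forall>i<Suc m. mt E' ((phi E' ^^ i) ?x)"
      using m1' pm mtd by (auto simp: less_Suc_eq)
    have "cnt (phi E') ?x (Suc m) = cnt (phi E) ?x m + 1"
      using c pm1 tri by (simp add: cnt_Suc del: funpow.simps)
    then show ?thesis unfolding region_def hx
      using m1'' pm1 h sj' g by (intro exI[of _ "Suc m"]) auto
  qed
qed

lemma region_prefix:
  assumes r: "region E L j0" and sub: "E \<subseteq> E'" and u: "uniq E'"
    and ph: "phi E' (rot (hd' L' j1)) = rot (hd' L j0)"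
    and mty: "mt E' (rot (hd' L' j1))" and tri: "is_tri (fst (rot (hd' L' j1)))"
    and s: "Suc j0 < length L \<Longrightarrow> Suc j1 < length L' \<and> L' ! Suc j1 = L ! Suc j0"
    and g: "Suc j0 < length L \<Longrightarrow> gf (sg L' j1 = sg L' (Suc j1)) (sv L' j1 - sv L' (Suc j1)) \<le> gf (sg L j0 = sg L (Suc j0)) (sv L j0 - sv L (Suc j0)) + 1"
  shows "region E' L' j1"
proof -
  let ?x = "rot (hd' L j0)"
  let ?y = "rot (hd' L' j1)"
  obtain m where m1: "\<forall>i<m. mt E ((phi E ^^ i) ?x)"
    and m2: "\<not> tc (fst ((phi E ^^ m) ?x)) \<or>
       (Suc j0 < length L \<and> (phi E ^^ m) ?x = hd' L (Suc j0) \<and>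
        gf (sg L j0 = sg L (Suc j0)) (sv L j0 - sv L (Suc j0)) \<le> cnt (phi E) ?x m)"
    using r unfolding region_def by blast
  have ag: "(phi E' ^^ i) ?x = (phi E ^^ i) ?x" if "i \<le> m" for i
    using agree[OF u sub m1 that] .
  have ag2: "(phi E' ^^ Suc i) ?y = (phi E ^^ i) ?x" if "i \<le> m" for i
    using ag[OF that] ph by (simp add: funpow_Suc_right del: funpow.simps)
  have c: "cnt (phi E') ?y (Suc m) = cnt (phi E) ?x m + 1"
  proof -
    have "cnt (phi E') ?y (Suc m) = 1 + cnt (phi E') ?x m" using cnt_shift[of "phi E'" ?y m] tri ph by simp
    moreover have "cnt (phi E') ?x m = cnt (phi E) ?x m" by (rule cnt_cong) (rule ag)
    ultimately show ?thesis by simp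
  qed
  have m1': "\<forall>i<Suc m. mt E' ((phi E' ^^ i) ?y)"
  proof (intro allI impI)
    fix i assume "i < Suc m"
    then show "mt E' ((phi E' ^^ i) ?y)"
    proof (cases i)
      case 0 then show ?thesis using mty by simp
    next
      case (Suc i')
      then have "i' < m" using \<open>i < Suc m\<close> by simp
      then show ?thesis using ag2[of i'] m1 mt_mono[OF _ sub] Suc by simp
    qed
  qed
  from m2 show ?thesis
  proof
    assume "\<not> tc (fst ((phi E ^^ m) ?x))"
    then show ?thesis unfolding region_def using m1' ag2[of m] by (intro exI[of _ "Suc m"]) auto
  next
    assume h: "Suc j0 < length L \<and> (phi E ^^ m) ?x = hd' L (Suc j0) \<and>
        gf (sg L j0 = sg L (Suc j0)) (sv L j0 - sv L (Suc j0)) \<le> cnt (phi E) ?x m"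
    then have s': "Suc j1 < length L'" "L' ! Suc j1 = L ! Suc j0" using s by auto
    have "hd' L' (Suc j1) = hd' L (Suc j0)" using s' by (simp add: hd'_def)
    then show ?thesis unfolding region_def
      using m1' ag2[of m] h s' c g by (intro exI[of _ "Suc m"]) auto
  qed
qed

lemma region_merge:
  assumes r1: "region E L j" and r2: "region E L (Suc (Suc j))" and sj: "Suc (Suc j) < length L"
    and sub: "E \<subseteq> E'" and u: "uniq E'"
    and mtd: "mt E' (hd' L (Suc j))" and ph1: "phi E' (hd' L (Suc j)) = z"
    and mtz: "mt E' z" and ntri: "\<not> is_tri (fst z)" and ph2: "phi E' z = rot (hd' L (Suc (Suc j)))"
    and e: "L' ! j = L ! j"
    and s: "Suc (Suc (Suc j)) < length L \<Longrightarrow> Suc j < length L' \<and> L' ! Suc j = L ! Suc (Suc (Suc j))"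
    and g: "Suc (Suc (Suc j)) < length L \<Longrightarrow> gf (sg L' j = sg L' (Suc j)) (sv L' j - sv L' (Suc j)) \<le>
       gf (sg L j = sg L (Suc j)) (sv L j - sv L (Suc j)) +
       gf (sg L (Suc (Suc j)) = sg L (Suc (Suc (Suc j)))) (sv L (Suc (Suc j)) - sv L (Suc (Suc (Suc j))))"
  shows "region E' L' j"
proof -
  let ?x = "rot (hd' L j)"
  let ?y = "rot (hd' L (Suc (Suc j)))"
  obtain m where m1: "\<forall>i<m. mt E ((phi E ^^ i) ?x)"
    and m2: "\<not> tc (fst ((phi E ^^ m) ?x)) \<or>
       (Suc j < length L \<and> (phi E ^^ m) ?x = hd' L (Suc j) \<and>
        gf (sg L j = sg L (Suc j)) (sv L j - sv L (Suc j)) \<le> cnt (phi E) ?x m)"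
    using r1 unfolding region_def by blast
  obtain n where n1: "\<forall>i<n. mt E ((phi E ^^ i) ?y)"
    and n2: "\<not> tc (fst ((phi E ^^ n) ?y)) \<or>
       (Suc (Suc (Suc j)) < length L \<and> (phi E ^^ n) ?y = hd' L (Suc (Suc (Suc j))) \<and>
        gf (sg L (Suc (Suc j)) = sg L (Suc (Suc (Suc j)))) (sv L (Suc (Suc j)) - sv L (Suc (Suc (Suc j)))) \<le> cnt (phi E) ?y n)"
    using r2 unfolding region_def by blast
  have hx: "rot (hd' L' j) = ?x" using e by (simp add: hd'_def)
  have ag: "(phi E' ^^ i) ?x = (phi E ^^ i) ?x" if "i \<le> m" for i
    using agree[OF u sub m1 that] .
  have agy: "(phi E' ^^ i) ?y = (phi E ^^ i) ?y" if "i \<le> n" for i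
    using agree[OF u sub n1 that] .
  have c1: "cnt (phi E') ?x m = cnt (phi E) ?x m" by (rule cnt_cong) (rule ag)
  have c2: "cnt (phi E') ?y n = cnt (phi E) ?y n" by (rule cnt_cong) (rule agy)
  have m1': "\<forall>i<m. mt E' ((phi E' ^^ i) ?x)" using m1 ag mt_mono[OF _ sub] by simp
  from m2 show ?thesis
  proof
    assume "\<not> tc (fst ((phi E ^^ m) ?x))"
    then show ?thesis unfolding region_def hx using m1' ag[of m] by auto
  next
    assume h: "Suc j < length L \<and> (phi E ^^ m) ?x = hd' L (Suc j) \<and>
        gf (sg L j = sg L (Suc j)) (sv L j - sv L (Suc j)) \<le> cnt (phi E) ?x m"
    have pm: "(phi E' ^^ m) ?x = hd' L (Suc j)" using h ag[of m] by simp
    have pm1: "(phi E' ^^ Suc m) ?x = z" using pm ph1 by simp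
    have pm2: "(phi E' ^^ Suc (Suc m)) ?x = ?y" using pm1 ph2 by simp
    have big: "(phi E' ^^ (i + Suc (Suc m))) ?x = (phi E ^^ i) ?y" if "i \<le> n" for i
    proof -
      have "(phi E' ^^ (i + Suc (Suc m))) ?x = (phi E' ^^ i) ((phi E' ^^ Suc (Suc m)) ?x)" by (rule fp[symmetric])
      also have "\<dots> = (phi E' ^^ i) ?y" by (simp only: pm2)
      finally show ?thesis using agy[OF that] by simp
    qed
    have mall: "\<forall>i<n + Suc (Suc m). mt E' ((phi E' ^^ i) ?x)"
    proof (intro allI impI)
      fix i assume i: "i < n + Suc (Suc m)"
      consider "i < m" | "i = m" | "i = Suc m" | "Suc (Suc m) \<le> i" by linarith
      then show "mt E' ((phi E' ^^ i) ?x)"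
      proof cases
        case 1 then show ?thesis using m1' by simp
      next
        case 2 then show ?thesis using pm mtd by simp
      next
        case 3 then show ?thesis using pm1 mtz by simp
      next
        case 4
        then obtain i' where i': "i = i' + Suc (Suc m)" "i' < n" using i
          by (metis add.commute le_iff_add nat_add_left_cancel_less)
        then show ?thesis using big[of i'] n1 mt_mono[OF _ sub] by simp
      qed
    qed
    have endp: "(phi E' ^^ (n + Suc (Suc m))) ?x = (phi E ^^ n) ?y" using big[of n] by simp
    from n2 show ?thesis
    proof
      assume "\<not> tc (fst ((phi E ^^ n) ?y))"
      then show ?thesis unfolding region_def hx using mall endp
        by (intro exI[of _ "n + Suc (Suc m)"]) auto
    next
      assume h2: "Suc (Suc (Suc j)) < length L \<and> (phi E ^^ n) ?y = hd' L (Suc (Suc (Suc j))) \<and>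
        gf (sg L (Suc (Suc j)) = sg L (Suc (Suc (Suc j)))) (sv L (Suc (Suc j)) - sv L (Suc (Suc (Suc j)))) \<le> cnt (phi E) ?y n"
      then have s': "Suc j < length L'" "L' ! Suc j = L ! Suc (Suc (Suc j))" using s by auto
      have hh: "hd' L' (Suc j) = hd' L (Suc (Suc (Suc j)))" using s' by (simp add: hd'_def)
      have "cnt (phi E') ?x (m + Suc (Suc n)) = cnt (phi E') ?x m + cnt (phi E') z (Suc n)"
        using cnt_split[of "phi E'" ?x m "Suc n"] pm1 by simp
      also have "cnt (phi E') z (Suc n) = cnt (phi E') ?y n"
        using cnt_shift[of "phi E'" z n] ntri ph2 by simp
      finally have cc: "cnt (phi E') ?x (n + Suc (Suc m)) = cnt (phi E) ?x m + cnt (phi E) ?y n"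
        using c1 c2 by (simp add: add.commute)
      show ?thesis unfolding region_def hx
        using mall endp h h2 hh s' cc g by (intro exI[of _ "n + Suc (Suc m)"]) auto
    qed
  qed
qed

lemma region_stop:
  assumes r: "region E L i" and sub: "E \<subseteq> E'" and u: "uniq E'" and ag: "allgood E' y"
    and ph: "phi E' y = rot (hd' L i)" and un: "Suc i < length L \<Longrightarrow> \<not> mt E' (hd' L (Suc i))"
  shows False
proof -
  let ?x = "rot (hd' L i)"
  obtain m where m1: "\<forall>i<m. mt E ((phi E ^^ i) ?x)"
    and m2: "\<not> tc (fst ((phi E ^^ m) ?x)) \<or>
       (Suc i < length L \<and> (phi E ^^ m) ?x = hd' L (Suc i) \<and>
        gf (sg L i = sg L (Suc i)) (sv L i - sv L (Suc i)) \<le> cnt (phi E) ?x m)"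
    using r unfolding region_def by blast
  have "(phi E' ^^ Suc m) y = (phi E' ^^ m) ?x" using ph by (simp add: funpow_Suc_right del: funpow.simps)
  also have "\<dots> = (phi E ^^ m) ?x" using agree[OF u sub m1] by simp
  finally have e: "(phi E' ^^ Suc m) y = (phi E ^^ m) ?x" .
  have "mt E' ((phi E' ^^ Suc m) y)" "tc (fst ((phi E' ^^ Suc m) y))" using ag unfolding allgood_def by blast+
  then show False using m2 e un by auto
qed

lemma cnt_extra:
  assumes "(p ^^ m) x = d"
  shows "cnt p x (m + r) = cnt p x m + (\<Sum>q\<in>{Suc 0..r}. if is_tri (fst ((p ^^ q) d)) then 1 else 0)"
proof (induction r)
  case 0 then show ?case by simp
next
  case (Suc r)
  have "(p ^^ Suc (m + r)) x = (p ^^ Suc r) d"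
    using assms fp[where p=p and a="Suc r" and b=m and x=x] by (simp add: add.commute)
  then show ?case using Suc by (simp add: cnt_Suc del: funpow.simps)
qed

lemma region_close:
  assumes r: "region E L k" and sub: "E \<subseteq> E'" and u: "uniq E'" and fin: "finite E'"
    and v: "\<forall>x. mt E' x \<longrightarrow> valid x" and ag: "allgood E' x0"
    and ph: "phi E' x0 = rot (hd' L k)"
    and cyc: "(phi E' ^^ Suc r) (hd' L (Suc k)) = x0"
    and nr: "\<forall>q. 0 < q \<longrightarrow> q \<le> r \<longrightarrow> (phi E' ^^ q) (hd' L (Suc k)) \<noteq> x0"
    and old: "\<forall>y. mt E y \<longrightarrow> y \<noteq> x0" and ne: "hd' L (Suc k) \<noteq> x0"
  shows "Suc k < length L \<and> (if is_tri (fst x0) then 1 else 0) + gf (sg L k = sg L (Suc k)) (sv L k - sv L (Suc k))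
     + (\<Sum>q\<in>{Suc 0..r}. if is_tri (fst ((phi E' ^^ q) (hd' L (Suc k)))) then 1 else 0)
     \<le> card {y \<in> orb (phi E') x0. is_tri (fst y)}"
proof -
  let ?x = "rot (hd' L k)"
  let ?d = "hd' L (Suc k)"
  let ?p = "phi E'"
  obtain m where m1: "\<forall>i<m. mt E ((phi E ^^ i) ?x)"
    and m2: "\<not> tc (fst ((phi E ^^ m) ?x)) \<or>
       (Suc k < length L \<and> (phi E ^^ m) ?x = hd' L (Suc k) \<and>
        gf (sg L k = sg L (Suc k)) (sv L k - sv L (Suc k)) \<le> cnt (phi E) ?x m)"
    using r unfolding region_def by blast
  have agr: "(?p ^^ i) ?x = (phi E ^^ i) ?x" if "i \<le> m" for i using agree[OF u sub m1 that] .
  have sh: "(?p ^^ Suc i) x0 = (?p ^^ i) ?x" for i using ph by (simp add: funpow_Suc_right del: funpow.simps)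
  have "tc (fst ((?p ^^ Suc m) x0))" using ag unfolding allgood_def by blast
  then have "tc (fst ((phi E ^^ m) ?x))" using sh[of m] agr[of m] by simp
  then have h: "Suc k < length L \<and> (phi E ^^ m) ?x = ?d \<and>
        gf (sg L k = sg L (Suc k)) (sv L k - sv L (Suc k)) \<le> cnt (phi E) ?x m" using m2 by blast
  have pm: "(?p ^^ m) ?x = ?d" using h agr[of m] by simp
  have big: "(?p ^^ (q + Suc m)) x0 = (?p ^^ q) ?d" for q
  proof -
    have "(?p ^^ (q + Suc m)) x0 = (?p ^^ q) ((?p ^^ Suc m) x0)" by (rule fp[symmetric])
    also have "\<dots> = (?p ^^ q) ?d" using sh[of m] pm by simp
    finally show ?thesis .
  qed
  have cyc': "(?p ^^ Suc (m + Suc r)) x0 = x0"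
    using big[of "Suc r"] cyc by (simp add: add.commute)
  have nr': "\<forall>q. 0 < q \<longrightarrow> q \<le> m + Suc r \<longrightarrow> (?p ^^ q) x0 \<noteq> x0"
  proof (intro allI impI)
    fix q assume q0: "0 < q" and qn: "q \<le> m + Suc r"
    show "(?p ^^ q) x0 \<noteq> x0"
    proof (cases "q \<le> m")
      case True
      then obtain i where i: "q = Suc i" "i < m" using q0 by (cases q) auto
      have "mt E ((phi E ^^ i) ?x)" using m1 i by simp
      then have "(phi E ^^ i) ?x \<noteq> x0" using old by blast
      then show ?thesis using sh[of i] agr[of i] i by simp
    next
      case False
      define q' where "q' = q - Suc m"
      have q': "q = q' + Suc m" "q' \<le> r" using False qn unfolding q'_def by auto
      show ?thesis
      proof (cases q')
        case 0 then show ?thesis using q' big[of 0] ne by simp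
      next
        case (Suc q'')
        have e: "(?p ^^ q) x0 = (?p ^^ q') ?d" by (simp only: q'(1) big)
        have "(?p ^^ q') ?d \<noteq> x0" using nr q'(2) Suc by blast
        then show ?thesis using e by simp
      qed
    qed
  qed
  have agall: "allgood E' x0" by (rule ag)
  have cc: "cnt ?p x0 (m + Suc r) \<le> card {y \<in> orb ?p x0. is_tri (fst y)}"
    by (rule cycle_count[OF u v fin agall cyc' nr'])
  have "cnt ?p x0 (m + Suc r) = cnt ?p x0 (Suc (m + r))" by simp
  also have "\<dots> = (if is_tri (fst x0) then 1 else 0) + cnt ?p (?p x0) (m + r)" by (rule cnt_shift)
  also have "cnt ?p (?p x0) (m + r) = cnt ?p ?x m + (\<Sum>q\<in>{Suc 0..r}. if is_tri (fst ((?p ^^ q) ?d)) then 1 else 0)"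
    using cnt_extra[OF pm, of r] ph by simp
  also have "cnt ?p ?x m = cnt (phi E) ?x m" by (rule cnt_cong) (rule agr)
  finally show ?thesis using cc h by linarith
qed



lemma fresh_ne: "fresh c x \<Longrightarrow> c \<le> m \<Longrightarrow> fst x \<noteq> Tri m \<and> fst x \<noteq> Cp m"
  by (cases x; rename_tac v a; case_tac v) auto

lemma fresh_mono: "fresh c x \<Longrightarrow> c \<le> c' \<Longrightarrow> fresh c' x"
  by (cases x; rename_tac v a; case_tac v) auto

lemma gfH_left:
  "a \<in> {-1,0,1} \<Longrightarrow> ((j,j'),(nj,nj')) \<in> {((1,0),(0,1)),((0,0),(-1,1)),((0,-1),(-1,0::int))} \<Longrightarrow> s' \<noteq> (s::bool) \<Longrightarrow>
   gf (t = s') (a - nj) \<le> gf (t = s) (a - j) + 1"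
  unfolding gf_def by (cases t; cases s; cases s'; auto split: if_splits)

lemma gfH_right:
  "b \<in> {-1,0,1} \<Longrightarrow> ((j,j'),(nj,nj')) \<in> {((1,0),(0,1)),((0,0),(-1,1)),((0,-1),(-1,0::int))} \<Longrightarrow> s' \<noteq> (s::bool) \<Longrightarrow>
   gf (s = u) (nj' - b) \<le> gf (s' = u) (j' - b) + 1"
  unfolding gf_def by (cases u; cases s; cases s'; auto split: if_splits)

lemma gfH_new:
  "((j,j'),(nj,nj')) \<in> {((1,0),(0,1)),((0,0),(-1,1)),((0,-1),(-1,0::int))} \<Longrightarrow> s' \<noteq> s \<Longrightarrow>
   gf (s' = s) (nj - nj') \<le> 2"
  unfolding gf_def by auto

lemma gfH_close:
  "((j,j'),(nj,nj')) \<in> {((1,0),(0,1)),((0,0),(-1,1)),((0,-1),(-1,0::int))} \<Longrightarrow> s' \<noteq> s \<Longrightarrow>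
   4 \<le> gf (s = s') (j - j')"
  unfolding gf_def by auto



lemma inv_H:
  assumes I: "Inv L c E" and k: "Suc k < length L"
    and Lk: "L ! k = (s, j, d)" and Lk1: "L ! Suc k = (s', j', d')" and ss: "s' \<noteq> s"
    and tr: "((j, j'), (nj, nj')) \<in> {((1, 0), (0, 1)), ((0, 0), (-1, 1)), ((0, -1), (-1, 0::int))}"
  shows "Inv (take k L @ [(s', nj, (Tri c, 1)), (s, nj', (Tri (Suc c), 2))] @ drop (Suc (Suc k)) L) (Suc (Suc c))
             (E \<union> {(d, (Tri c, 0)), (d', (Tri (Suc c), 0)), ((Tri c, 2), (Tri (Suc c), 1))})"
proof -
  define L' where "L' = take k L @ [(s', nj, (Tri c, 1)), (s, nj', (Tri (Suc c), 2))] @ drop (Suc (Suc k)) L"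
  define E' where "E' = E \<union> {(d, (Tri c, 0)), (d', (Tri (Suc c), 0)), ((Tri c, 2), (Tri (Suc c), 1))}"
  note I' = I[unfolded Inv_def]
  have fin: "finite E" using I' by blast
  have u: "uniq E" using I' by blast
  have unm: "\<forall>i<length L. \<not> mt E (hd' L i)" using I' by blast
  have dist: "\<forall>i<length L. \<forall>j<length L. hd' L i = hd' L j \<longrightarrow> i = j" using I' by blast
  have fr: "\<forall>x. mt E x \<longrightarrow> fresh c x \<and> valid x" using I' by blast
  have hfr: "\<forall>i<length L. fresh c (hd' L i) \<and> valid (hd' L i) \<and> \<not> is_cp (fst (hd' L i))" using I' by blast
  have rc: "\<forall>x. (mt E x \<or> (\<exists>i<length L. x = hd' L i)) \<longrightarrow> tc (fst x) \<longrightarrow> mt E (rot x) \<or> (\<exists>i<length L. rot x = hd' L i)"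
    using I' by blast
  have stv: "\<forall>i<length L. sv L i \<in> {-1, 0, 1}" using I' by blast
  have ncp: "\<forall>(a, b)\<in>E. \<not> is_cp (fst a)" using I' by blast
  have reg: "\<forall>i<length L. region E L i" using I' by blast
  have cg: "closed_good E" using I' by blast

  have len: "length L' = length L" unfolding L'_def using k by simp
  have nlt: "i < k \<Longrightarrow> L' ! i = L ! i" for i unfolding L'_def using k by (simp add: nth_append)
  have nk: "L' ! k = (s', nj, (Tri c, 1))" unfolding L'_def using k by (simp add: nth_append)
  have nk1: "L' ! Suc k = (s, nj', (Tri (Suc c), 2))" unfolding L'_def using k by (simp add: nth_append)
  have ngt: "Suc (Suc k) \<le> i \<Longrightarrow> i < length L \<Longrightarrow> L' ! i = L ! i" for i
  proof -
    assume a: "Suc (Suc k) \<le> i" "i < length L"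
    then have "Suc (Suc (i - 2)) = i" by arith
    then show ?thesis unfolding L'_def using k a by (simp add: nth_append)
  qed
  have hdk: "hd' L k = d" "hd' L (Suc k) = d'" using Lk Lk1 by (simp_all add: hd'_def)
  have sgk: "sg L k = s" "sg L (Suc k) = s'" "sv L k = j" "sv L (Suc k) = j'" using Lk Lk1 by (simp_all add: sg_def sv_def)
  have nother: "L' ! i = L ! i" if "i < length L" "i \<noteq> k" "i \<noteq> Suc k" for i
  proof (cases "i < k")
    case True then show ?thesis by (rule nlt)
  next
    case False then show ?thesis using that by (intro ngt) auto
  qed
  have hdL': "hd' L' i = (if i = k then (Tri c, 1) else if i = Suc k then (Tri (Suc c), 2) else hd' L i)"
    if "i < length L" for i
    using that nother nk nk1 by (auto simp: hd'_def)
  have sgL': "sg L' i = (if i = k then s' else if i = Suc k then s else sg L i)" if "i < length L" for i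
    using that nother nk nk1 by (auto simp: sg_def)
  have svL': "sv L' i = (if i = k then nj else if i = Suc k then nj' else sv L i)" if "i < length L" for i
    using that nother nk nk1 by (auto simp: sv_def)

  have oldTri: "fst x \<noteq> Tri c \<and> fst x \<noteq> Tri (Suc c) \<and> fst x \<noteq> Cp c" if "mt E x \<or> (\<exists>i<length L. x = hd' L i)" for x
  proof -
    have "fresh c x" using that fr hfr by blast
    then show ?thesis using fresh_ne[of c x c] fresh_ne[of c x "Suc c"] by auto
  qed
  have nmE: "\<not> mt E (Tri c, a)" "\<not> mt E (Tri (Suc c), a)" for a using oldTri by force+
  have dd: "d \<noteq> d'" using dist k hdk by (metis Suc_lessD n_not_Suc_n)
  have dT: "fst d \<noteq> Tri c" "fst d \<noteq> Tri (Suc c)" "fst d' \<noteq> Tri c" "fst d' \<noteq> Tri (Suc c)"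
    using oldTri[of d] oldTri[of d'] hdk k by (metis Suc_lessD)+
  have nmd: "\<not> mt E d" "\<not> mt E d'" using unm hdk k by (metis Suc_lessD)+

  define E1 where "E1 = insert ((Tri c, 2), (Tri (Suc c), 1)) E"
  define E2 where "E2 = insert (d', (Tri (Suc c), 0)) E1"
  have E'eq: "E' = insert (d, (Tri c, 0)) E2" unfolding E'_def E2_def E1_def by auto
  have u1: "uniq E1" unfolding E1_def by (rule uniq_add[OF u nmE(1) nmE(2)]) simp
  have u2: "uniq E2" unfolding E2_def
    by (rule uniq_add[OF u1]) (use nmd dT nmE in \<open>auto simp: E1_def mt_insert\<close>)
  have u': "uniq E'" unfolding E'eq
    by (rule uniq_add[OF u2]) (use nmd dT nmE dd in \<open>auto simp: E2_def E1_def mt_insert\<close>)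
  have mtE': "mt E' x \<longleftrightarrow> mt E x \<or> x = d \<or> x = (Tri c, 0) \<or> x = d' \<or> x = (Tri (Suc c), 0) \<or> x = (Tri c, 2) \<or> x = (Tri (Suc c), 1)" for x
    unfolding E'eq E2_def E1_def mt_insert by blast
  have sub: "E \<subseteq> E'" unfolding E'_def by blast
  have fin': "finite E'" unfolding E'_def using fin by simp
  have "phi E' d = rot (Tri c, 0)" by (rule phi_adj[OF u']) (simp add: adj_def E'_def)
  then have ph1: "phi E' d = (Tri c, 1)" by simp
  have ph2: "phi E' (Tri c, 0) = rot d" by (rule phi_adj[OF u']) (simp add: adj_def E'_def)
  have "phi E' d' = rot (Tri (Suc c), 0)" by (rule phi_adj[OF u']) (simp add: adj_def E'_def)
  then have ph3: "phi E' d' = (Tri (Suc c), 1)" by simp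
  have ph4: "phi E' (Tri (Suc c), 0) = rot d'" by (rule phi_adj[OF u']) (simp add: adj_def E'_def)
  have "phi E' (Tri c, 2) = rot (Tri (Suc c), 1)" by (rule phi_adj[OF u']) (simp add: adj_def E'_def)
  then have ph5: "phi E' (Tri c, 2) = (Tri (Suc c), 2)" by simp
  have "phi E' (Tri (Suc c), 1) = rot (Tri c, 2)" by (rule phi_adj[OF u']) (simp add: adj_def E'_def)
  then have ph6: "phi E' (Tri (Suc c), 1) = (Tri c, 0)" by simp

  have old_unm: "\<not> mt E' (hd' L i)" if "i < length L" "i \<noteq> k" "i \<noteq> Suc k" for i
  proof -
    have "hd' L i \<noteq> d" "hd' L i \<noteq> d'" using dist that hdk k by (metis Suc_lessD)+
    moreover have "fst (hd' L i) \<noteq> Tri c" "fst (hd' L i) \<noteq> Tri (Suc c)" using oldTri that(1) by blast+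
    ultimately show ?thesis using unm that(1) mtE' by auto
  qed

  show ?thesis
    unfolding Inv_def L'_def[symmetric] E'_def[symmetric]
  proof (intro conjI)
    show "finite E'" by (rule fin')
    show "uniq E'" by (rule u')
    show "\<forall>i<length L'. \<not> mt E' (hd' L' i)"
    proof (intro allI impI)
      fix i assume "i < length L'"
      then have i: "i < length L" using len by simp
      show "\<not> mt E' (hd' L' i)"
        using old_unm[OF i] hdL'[OF i] mtE' nmE dT by auto
    qed
    show "\<forall>i<length L'. \<forall>j<length L'. hd' L' i = hd' L' j \<longrightarrow> i = j"
    proof (intro allI impI)
      fix i i' assume "i < length L'" "i' < length L'" and e: "hd' L' i = hd' L' i'"
      then have i: "i < length L" "i' < length L" using len by auto
      have o1: "fst (hd' L i) \<noteq> Tri c \<and> fst (hd' L i) \<noteq> Tri (Suc c)" using oldTri i(1) by blast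
      have o2: "fst (hd' L i') \<noteq> Tri c \<and> fst (hd' L i') \<noteq> Tri (Suc c)" using oldTri i(2) by blast
      show "i = i'" using e hdL'[OF i(1)] hdL'[OF i(2)] dist i o1 o2
        by (auto split: if_splits) (metis fst_conv)+
    qed
    show "\<forall>x. mt E' x \<longrightarrow> fresh (Suc (Suc c)) x \<and> valid x"
    proof (intro allI impI)
      fix x assume "mt E' x"
      then consider "mt E x" | "x = d" | "x = d'" | "x = (Tri c, 0)" | "x = (Tri (Suc c), 0)" | "x = (Tri c, 2)" | "x = (Tri (Suc c), 1)"
        using mtE' by blast
      then show "fresh (Suc (Suc c)) x \<and> valid x"
      proof cases
        case 1 then show ?thesis using fr fresh_mono by fastforce
      next
        case 2 then show ?thesis using hfr hdk k fresh_mono by (metis Suc_lessD le_SucI le_refl)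
      next
        case 3 then show ?thesis using hfr hdk k fresh_mono by (metis le_SucI le_refl)
      qed auto
    qed
    show "\<forall>i<length L'. fresh (Suc (Suc c)) (hd' L' i) \<and> valid (hd' L' i) \<and> \<not> is_cp (fst (hd' L' i))"
    proof (intro allI impI)
      fix i assume "i < length L'"
      then have i: "i < length L" using len by simp
      show "fresh (Suc (Suc c)) (hd' L' i) \<and> valid (hd' L' i) \<and> \<not> is_cp (fst (hd' L' i))"
        using hdL'[OF i] hfr i fresh_mono[of c "hd' L i" "Suc (Suc c)"] by auto
    qed
    show "\<forall>x. (mt E' x \<or> (\<exists>i<length L'. x = hd' L' i)) \<longrightarrow> tc (fst x) \<longrightarrow> mt E' (rot x) \<or> (\<exists>i<length L'. rot x = hd' L' i)"
    proof (intro allI impI)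
      fix x assume h: "mt E' x \<or> (\<exists>i<length L'. x = hd' L' i)" and t: "tc (fst x)"
      have oldc: "mt E' (rot y) \<or> (\<exists>i<length L'. rot y = hd' L' i)"
        if "mt E y \<or> (\<exists>i<length L. y = hd' L i)" "tc (fst y)" for y
      proof -
        from rc that have "mt E (rot y) \<or> (\<exists>i<length L. rot y = hd' L i)" by blast
        then show ?thesis
        proof
          assume "mt E (rot y)" then show ?thesis using sub mt_mono by blast
        next
          assume "\<exists>i<length L. rot y = hd' L i"
          then obtain i where i: "i < length L" "rot y = hd' L i" by blast
          show ?thesis
          proof (cases "i = k \<or> i = Suc k")
            case True then show ?thesis using i hdk mtE' by auto
          next
            case False then show ?thesis using i hdL'[OF i(1)] len by auto
          qed
        qed
      qed
      from h consider "mt E x" | "x = d" | "x = d'" | "x = (Tri c, 0)" | "x = (Tri (Suc c), 0)" | "x = (Tri c, 2)" | "x = (Tri (Suc c), 1)"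
        | "\<exists>i<length L. x = hd' L i" | "x = (Tri c, 1)" | "x = (Tri (Suc c), 2)"
      proof -
        assume a: "mt E x \<Longrightarrow> thesis" "x = d \<Longrightarrow> thesis" "x = d' \<Longrightarrow> thesis" "x = (Tri c, 0) \<Longrightarrow> thesis"
          "x = (Tri (Suc c), 0) \<Longrightarrow> thesis" "x = (Tri c, 2) \<Longrightarrow> thesis" "x = (Tri (Suc c), 1) \<Longrightarrow> thesis"
          "\<exists>i<length L. x = hd' L i \<Longrightarrow> thesis" "x = (Tri c, 1) \<Longrightarrow> thesis" "x = (Tri (Suc c), 2) \<Longrightarrow> thesis"
        from h show thesis
        proof
          assume "mt E' x" then show thesis using mtE' a by blast
        next
          assume "\<exists>i<length L'. x = hd' L' i"
          then obtain i where i: "i < length L" "x = hd' L' i" using len by auto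
          then show thesis using hdL'[OF i(1)] a by (auto split: if_splits)
        qed
      qed
      then show "mt E' (rot x) \<or> (\<exists>i<length L'. rot x = hd' L' i)"
      proof cases
        case 1 then show ?thesis using oldc t by blast
      next
        case 2 then show ?thesis using oldc t hdk k by (metis Suc_lessD)
      next
        case 3 then show ?thesis using oldc t hdk k by metis
      next
        case 4 then show ?thesis using hdL'[of k] k len by (intro disjI2 exI[of _ k]) auto
      next
        case 5 then show ?thesis using mtE' by simp
      next
        case 6 then show ?thesis using mtE' by simp
      next
        case 7 then show ?thesis using hdL'[of "Suc k"] k len by (intro disjI2 exI[of _ "Suc k"]) auto
      next
        case 8 then show ?thesis using oldc t by blast
      next
        case 9 then show ?thesis using mtE' by simp
      next
        case 10 then show ?thesis using mtE' by simp
      qed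
    qed
    show "\<forall>i<length L'. sv L' i \<in> {-1, 0, 1}"
      using svL' stv tr len by auto
    show "\<forall>(a, b)\<in>E'. \<not> is_cp (fst a)"
    proof -
      have "\<not> is_cp (fst d)" "\<not> is_cp (fst d')" using hfr hdk k by (metis Suc_lessD)+
      then show ?thesis using ncp unfolding E'_def by auto
    qed
    have v': "\<forall>x. mt E' x \<longrightarrow> valid x"
    proof (intro allI impI)
      fix x assume "mt E' x"
      then consider "mt E x" | "x = d" | "x = d'" | "x = (Tri c, 0)" | "x = (Tri (Suc c), 0)" | "x = (Tri c, 2)" | "x = (Tri (Suc c), 1)"
        using mtE' by blast
      then show "valid x"
      proof cases
        case 1 then show ?thesis using fr by blast
      next
        case 2 then show ?thesis using hfr hdk k by (metis Suc_lessD)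
      next
        case 3 then show ?thesis using hfr hdk k by metis
      qed auto
    qed
    have key: "6 \<le> card {y \<in> orb (phi E') (Tri c, 0). is_tri (fst y)}" if ag: "allgood E' (Tri c, 0)"
    proof -
      have rk: "region E L k" using reg k by simp
      have cyc: "(phi E' ^^ Suc 1) (hd' L (Suc k)) = (Tri c, 0)" using hdk ph3 ph6 by simp
      have nr: "\<forall>q. 0 < q \<longrightarrow> q \<le> 1 \<longrightarrow> (phi E' ^^ q) (hd' L (Suc k)) \<noteq> (Tri c, 0)"
        using hdk ph3 by (auto simp: le_Suc_eq)
      have old: "\<forall>y. mt E y \<longrightarrow> y \<noteq> (Tri c, 0)" using nmE by blast
      have ne: "hd' L (Suc k) \<noteq> (Tri c, 0)" using hdk dT by auto
      have ph2': "phi E' (Tri c, 0) = rot (hd' L k)" using ph2 hdk by simp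
      note rcl = region_close[OF rk sub u' fin' v' ag ph2' cyc nr old ne]
      have "4 \<le> gf (sg L k = sg L (Suc k)) (sv L k - sv L (Suc k))"
        using gfH_close[OF tr ss] sgk by simp
      then show ?thesis using rcl hdk ph3 by simp
    qed
    show "closed_good E'"
    proof (rule closed_good_step[OF cg sub u' fin'])
      fix x assume m': "mt E' x" and nm: "\<not> mt E x" and ag: "allgood E' x"
      have agk: "mt E' ((phi E' ^^ n) x) \<and> tc (fst ((phi E' ^^ n) x))" for n
        using ag unfolding allgood_def by blast
      from m' nm consider "x = d" | "x = d'" | "x = (Tri c, 0)" | "x = (Tri (Suc c), 0)" | "x = (Tri c, 2)" | "x = (Tri (Suc c), 1)"
        using mtE' by blast
      then show "6 \<le> card {y \<in> orb (phi E') x. is_tri (fst y)}"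
      proof cases
        case 1
        then have False using agk[of 1] ph1 mtE' nmE dT by auto
        then show ?thesis ..
      next
        case 2
        show ?thesis
          by (rule good_shift[OF ag fin', of 2]) (use key 2 ph3 ph6 in \<open>simp add: numeral_2_eq_2\<close>)
      next
        case 3 then show ?thesis using key ag by simp
      next
        case 4
        have False
        proof (rule region_stop[OF _ sub u' ag])
          show "region E L (Suc k)" using reg k by simp
          show "phi E' x = rot (hd' L (Suc k))" using 4 ph4 hdk by simp
          show "\<not> mt E' (hd' L (Suc (Suc k)))" if "Suc (Suc k) < length L"
            using old_unm[OF that] by simp
        qed
        then show ?thesis ..
      next
        case 5
        then have False using agk[of 1] ph5 mtE' nmE dT by auto
        then show ?thesis ..
      next
        case 6
        show ?thesis
          by (rule good_shift[OF ag fin', of 1]) (use key 6 ph6 in simp)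
      qed
    qed
    show "\<forall>i<length L'. region E' L' i"
    proof (intro allI impI)
      fix i assume "i < length L'"
      then have i: "i < length L" using len by simp
      consider "Suc i < k" | "Suc i = k" | "i = k" | "i = Suc k" | "Suc (Suc k) \<le> i" by linarith
      then show "region E' L' i"
      proof cases
        case 1
        show ?thesis
          by (rule region_transfer[OF _ sub u']) (use reg i 1 nlt len in auto)
      next
        case 2
        show ?thesis
        proof (rule region_extend[OF _ _ sub u'])
          show "region E L i" using reg i by simp
          show "Suc i < length L" using 2 k by simp
          show "mt E' (hd' L (Suc i))" using 2 hdk mtE' by simp
          show "phi E' (hd' L (Suc i)) = hd' L' (Suc i)" using 2 hdk ph1 hdL'[of k] k by simp
          show "is_tri (fst (hd' L' (Suc i)))" using 2 hdL'[of k] k by simp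
          show "L' ! i = L ! i" using 2 nlt by simp
          show "Suc i < length L'" using 2 k len by simp
          have "sv L i \<in> {-1, 0, 1}" using stv i by blast
          then show "gf (sg L' i = sg L' (Suc i)) (sv L' i - sv L' (Suc i))
              \<le> gf (sg L i = sg L (Suc i)) (sv L i - sv L (Suc i)) + 1"
            using gfH_left[OF _ tr ss, of "sv L i" "sg L i"] 2 sgL'[OF i] sgL'[of k] svL'[OF i] svL'[of k] k sgk
            by simp
        qed
      next
        case 3
        have a1: "rot (hd' L' i) = (Tri c, 2)" using 3 hdL'[OF i] by simp
        have a2: "phi E' (Tri c, 2) = hd' L' (Suc i)" using 3 hdL'[of "Suc k"] k ph5 by simp
        have a3: "cnt (phi E') (Tri c, 2) 1 = 2" using ph5 by (simp add: cnt_Suc cnt_0)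
        have a4: "gf (sg L' i = sg L' (Suc i)) (sv L' i - sv L' (Suc i)) \<le> 2"
          using gfH_new[OF tr ss] 3 sgL'[OF i] sgL'[of "Suc k"] svL'[OF i] svL'[of "Suc k"] k by simp
        show ?thesis unfolding region_def a1
          using a2 a3 a4 mtE' 3 k len by (intro exI[of _ 1]) auto
      next
        case 4
        show ?thesis
        proof (rule region_prefix[OF _ sub u'])
          show "region E L (Suc k)" using reg k by simp
          show "phi E' (rot (hd' L' i)) = rot (hd' L (Suc k))" using 4 hdL'[OF i] ph4 hdk by simp
          show "mt E' (rot (hd' L' i))" using 4 hdL'[OF i] mtE' by simp
          show "is_tri (fst (rot (hd' L' i)))" using 4 hdL'[OF i] by simp
          show "Suc i < length L' \<and> L' ! Suc i = L ! Suc (Suc k)" if "Suc (Suc k) < length L"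
            using 4 that len ngt by simp
          assume a: "Suc (Suc k) < length L"
          have "sv L (Suc (Suc k)) \<in> {-1, 0, 1}" using stv a by blast
          then show "gf (sg L' i = sg L' (Suc i)) (sv L' i - sv L' (Suc i))
              \<le> gf (sg L (Suc k) = sg L (Suc (Suc k))) (sv L (Suc k) - sv L (Suc (Suc k))) + 1"
            using gfH_right[OF _ tr ss, of "sv L (Suc (Suc k))" "sg L (Suc (Suc k))"] 4 sgL'[OF i] sgL'[OF a] svL'[OF i] svL'[OF a] sgk
            by simp
        qed
      next
        case 5
        show ?thesis
          by (rule region_transfer[OF _ sub u']) (use reg i 5 ngt len in auto)
      qed
    qed
  qed
qed



lemma gfY_left:
  "a \<in> {-1,0,1} \<Longrightarrow> ((j,j'),nj) \<in> {((1,0),1),((0,-1),-1),((1,-1),0::int)} \<Longrightarrow>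
   gf (t = (\<not> (s::bool))) (a - nj) \<le> gf (t = s) (a - j) + 1"
  unfolding gf_def by (cases t; cases s; auto split: if_splits)

lemma gfY_right:
  "b \<in> {-1,0,1} \<Longrightarrow> ((j,j'),nj) \<in> {((1,0),1),((0,-1),-1),((1,-1),0::int)} \<Longrightarrow>
   gf ((\<not> (s::bool)) = u) (nj - b) \<le> gf (s = u) (j' - b) + 1"
  unfolding gf_def by (cases u; cases s; auto split: if_splits)

lemma gfY_close:
  "((j,j'),nj) \<in> {((1,0),1),((0,-1),-1),((1,-1),0::int)} \<Longrightarrow> 5 \<le> gf True (j - j')"
  unfolding gf_def by auto

lemma inv_Y:
  assumes I: "Inv L c E" and k: "Suc k < length L"
    and Lk: "L ! k = (s, j, d)" and Lk1: "L ! Suc k = (s, j', d')"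
    and tr: "((j, j'), nj) \<in> {((1, 0), 1), ((0, -1), -1), ((1, -1), 0::int)}"
  shows "Inv (take k L @ [(\<not> s, nj, (Tri c, 1))] @ drop (Suc (Suc k)) L) (Suc c)
             (E \<union> {(d, (Tri c, 0)), (d', (Tri c, 2))})"
proof -
  define L' where "L' = take k L @ [(\<not> s, nj, (Tri c, 1))] @ drop (Suc (Suc k)) L"
  define E' where "E' = E \<union> {(d, (Tri c, 0)), (d', (Tri c, 2))}"
  note I' = I[unfolded Inv_def]
  have fin: "finite E" using I' by blast
  have u: "uniq E" using I' by blast
  have unm: "\<forall>i<length L. \<not> mt E (hd' L i)" using I' by blast
  have dist: "\<forall>i<length L. \<forall>j<length L. hd' L i = hd' L j \<longrightarrow> i = j" using I' by blast
  have fr: "\<forall>x. mt E x \<longrightarrow> fresh c x \<and> valid x" using I' by blast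
  have hfr: "\<forall>i<length L. fresh c (hd' L i) \<and> valid (hd' L i) \<and> \<not> is_cp (fst (hd' L i))" using I' by blast
  have rc: "\<forall>x. (mt E x \<or> (\<exists>i<length L. x = hd' L i)) \<longrightarrow> tc (fst x) \<longrightarrow> mt E (rot x) \<or> (\<exists>i<length L. rot x = hd' L i)"
    using I' by blast
  have stv: "\<forall>i<length L. sv L i \<in> {-1, 0, 1}" using I' by blast
  have ncp: "\<forall>(a, b)\<in>E. \<not> is_cp (fst a)" using I' by blast
  have reg: "\<forall>i<length L. region E L i" using I' by blast
  have cg: "closed_good E" using I' by blast

  have len: "length L' = length L - 1" unfolding L'_def using k by simp
  have nlt: "i < k \<Longrightarrow> L' ! i = L ! i" for i unfolding L'_def using k by (simp add: nth_append)
  have nk: "L' ! k = (\<not> s, nj, (Tri c, 1))" unfolding L'_def using k by (simp add: nth_append)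
  have ngt: "k < i \<Longrightarrow> i < length L' \<Longrightarrow> L' ! i = L ! Suc i" for i
  proof -
    assume a: "k < i" "i < length L'"
    have l: "i < length L - 1" using a len by simp
    have "(take k L @ [(\<not> s, nj, (Tri c, 1))] @ drop (Suc (Suc k)) L) ! i = (drop (Suc (Suc k)) L) ! (i - Suc k)"
      using a k by (simp add: nth_append)
    also have "\<dots> = L ! Suc i" using a l k by (simp add: Suc_diff_Suc)
    finally show ?thesis unfolding L'_def .
  qed
  have hdk: "hd' L k = d" "hd' L (Suc k) = d'" using Lk Lk1 by (simp_all add: hd'_def)
  have sgk: "sg L k = s" "sg L (Suc k) = s" "sv L k = j" "sv L (Suc k) = j'" using Lk Lk1 by (simp_all add: sg_def sv_def)
  define ox where "ox i = (if i < k then i else Suc i)" for i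
  have ox_lt: "i < length L' \<Longrightarrow> ox i < length L" for i unfolding ox_def using len k by auto
  have hdL': "hd' L' i = (if i = k then (Tri c, 1) else hd' L (ox i))" if "i < length L'" for i
    using that nlt ngt nk unfolding ox_def by (auto simp: hd'_def)
  have sgL': "sg L' i = (if i = k then \<not> s else sg L (ox i))" if "i < length L'" for i
    using that nlt ngt nk unfolding ox_def by (auto simp: sg_def)
  have svL': "sv L' i = (if i = k then nj else sv L (ox i))" if "i < length L'" for i
    using that nlt ngt nk unfolding ox_def by (auto simp: sv_def)
  have ox_ne: "ox i \<noteq> k" "ox i \<noteq> Suc k" if "i \<noteq> k" for i using that unfolding ox_def by auto
  have ox_inj: "ox i = ox i' \<Longrightarrow> i = i'" for i i' unfolding ox_def by (auto split: if_splits)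
  have ox_surj: "\<exists>i<length L'. i \<noteq> k \<and> i' = ox i" if "i' < length L" "i' \<noteq> k" "i' \<noteq> Suc k" for i'
  proof (cases "i' < k")
    case True then show ?thesis using that len k unfolding ox_def by (intro exI[of _ i']) auto
  next
    case False then show ?thesis using that len k unfolding ox_def by (intro exI[of _ "i' - 1"]) auto
  qed

  have oldTri: "fst x \<noteq> Tri c \<and> fst x \<noteq> Cp c" if "mt E x \<or> (\<exists>i<length L. x = hd' L i)" for x
  proof -
    have "fresh c x" using that fr hfr by blast
    then show ?thesis using fresh_ne[of c x c] by auto
  qed
  have nmE: "\<not> mt E (Tri c, a)" for a using oldTri by force
  have dd: "d \<noteq> d'" using dist k hdk by (metis Suc_lessD n_not_Suc_n)
  have dT: "fst d \<noteq> Tri c" "fst d' \<noteq> Tri c"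
    using oldTri[of d] oldTri[of d'] hdk k by (metis Suc_lessD)+
  have nmd: "\<not> mt E d" "\<not> mt E d'" using unm hdk k by (metis Suc_lessD)+

  define E1 where "E1 = insert (d', (Tri c, 2)) E"
  have E'eq: "E' = insert (d, (Tri c, 0)) E1" unfolding E'_def E1_def by auto
  have u1: "uniq E1" unfolding E1_def by (rule uniq_add[OF u nmd(2) nmE]) (use dT in auto)
  have u': "uniq E'" unfolding E'eq
    by (rule uniq_add[OF u1]) (use nmd dT nmE dd in \<open>auto simp: E1_def mt_insert\<close>)
  have mtE': "mt E' x \<longleftrightarrow> mt E x \<or> x = d \<or> x = (Tri c, 0) \<or> x = d' \<or> x = (Tri c, 2)" for x
    unfolding E'eq E1_def mt_insert by blast
  have sub: "E \<subseteq> E'" unfolding E'_def by blast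
  have fin': "finite E'" unfolding E'_def using fin by simp
  have "phi E' d = rot (Tri c, 0)" by (rule phi_adj[OF u']) (simp add: adj_def E'_def)
  then have ph1: "phi E' d = (Tri c, 1)" by simp
  have ph2: "phi E' (Tri c, 0) = rot d" by (rule phi_adj[OF u']) (simp add: adj_def E'_def)
  have "phi E' d' = rot (Tri c, 2)" by (rule phi_adj[OF u']) (simp add: adj_def E'_def)
  then have ph3: "phi E' d' = (Tri c, 0)" by simp
  have ph4: "phi E' (Tri c, 2) = rot d'" by (rule phi_adj[OF u']) (simp add: adj_def E'_def)

  have old_unm: "\<not> mt E' (hd' L i)" if "i < length L" "i \<noteq> k" "i \<noteq> Suc k" for i
  proof -
    have "hd' L i \<noteq> d" "hd' L i \<noteq> d'" using dist that hdk k by (metis Suc_lessD)+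
    moreover have "fst (hd' L i) \<noteq> Tri c" using oldTri that(1) by blast
    ultimately show ?thesis using unm that(1) mtE' by auto
  qed

  show ?thesis
    unfolding Inv_def L'_def[symmetric] E'_def[symmetric]
  proof (intro conjI)
    show "finite E'" by (rule fin')
    show "uniq E'" by (rule u')
    show "\<forall>i<length L'. \<not> mt E' (hd' L' i)"
    proof (intro allI impI)
      fix i assume i: "i < length L'"
      show "\<not> mt E' (hd' L' i)"
      proof (cases "i = k")
        case True then show ?thesis using hdL'[OF i] mtE' nmE dT by auto
      next
        case False then show ?thesis using hdL'[OF i] old_unm[OF ox_lt[OF i] ox_ne[OF False]] by simp
      qed
    qed
    show "\<forall>i<length L'. \<forall>j<length L'. hd' L' i = hd' L' j \<longrightarrow> i = j"
    proof (intro allI impI)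
      fix i i' assume i: "i < length L'" "i' < length L'" and e: "hd' L' i = hd' L' i'"
      have o1: "fst (hd' L (ox i)) \<noteq> Tri c" using oldTri ox_lt[OF i(1)] by blast
      have o2: "fst (hd' L (ox i')) \<noteq> Tri c" using oldTri ox_lt[OF i(2)] by blast
      show "i = i'" using e hdL'[OF i(1)] hdL'[OF i(2)] dist ox_lt[OF i(1)] ox_lt[OF i(2)] o1 o2 ox_inj
        by (auto split: if_splits) (metis fst_conv)+
    qed
    show "\<forall>x. mt E' x \<longrightarrow> fresh (Suc c) x \<and> valid x"
    proof (intro allI impI)
      fix x assume "mt E' x"
      then consider "mt E x" | "x = d" | "x = d'" | "x = (Tri c, 0)" | "x = (Tri c, 2)"
        using mtE' by blast
      then show "fresh (Suc c) x \<and> valid x"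
      proof cases
        case 1 then show ?thesis using fr fresh_mono by fastforce
      next
        case 2 then show ?thesis using hfr hdk k fresh_mono by (metis Suc_lessD le_SucI le_refl)
      next
        case 3 then show ?thesis using hfr hdk k fresh_mono by (metis le_SucI le_refl)
      qed auto
    qed
    show "\<forall>i<length L'. fresh (Suc c) (hd' L' i) \<and> valid (hd' L' i) \<and> \<not> is_cp (fst (hd' L' i))"
    proof (intro allI impI)
      fix i assume i: "i < length L'"
      show "fresh (Suc c) (hd' L' i) \<and> valid (hd' L' i) \<and> \<not> is_cp (fst (hd' L' i))"
        using hdL'[OF i] hfr ox_lt[OF i] fresh_mono[of c "hd' L (ox i)" "Suc c"] by auto
    qed
    show "\<forall>x. (mt E' x \<or> (\<exists>i<length L'. x = hd' L' i)) \<longrightarrow> tc (fst x) \<longrightarrow> mt E' (rot x) \<or> (\<exists>i<length L'. rot x = hd' L' i)"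
    proof (intro allI impI)
      fix x assume h: "mt E' x \<or> (\<exists>i<length L'. x = hd' L' i)" and t: "tc (fst x)"
      have oldc: "mt E' (rot y) \<or> (\<exists>i<length L'. rot y = hd' L' i)"
        if "mt E y \<or> (\<exists>i<length L. y = hd' L i)" "tc (fst y)" for y
      proof -
        from rc that have "mt E (rot y) \<or> (\<exists>i<length L. rot y = hd' L i)" by blast
        then show ?thesis
        proof
          assume "mt E (rot y)" then show ?thesis using sub mt_mono by blast
        next
          assume "\<exists>i<length L. rot y = hd' L i"
          then obtain i where i: "i < length L" "rot y = hd' L i" by blast
          show ?thesis
          proof (cases "i = k \<or> i = Suc k")
            case True then show ?thesis using i hdk mtE' by auto
          next
            case False
            then obtain i2 where i2: "i2 < length L'" "i2 \<noteq> k" "i = ox i2" using ox_surj i by blast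
            then show ?thesis using i hdL'[OF i2(1)] by auto
          qed
        qed
      qed
      from h consider "mt E x" | "x = d" | "x = d'" | "x = (Tri c, 0)" | "x = (Tri c, 2)"
        | "\<exists>i<length L. x = hd' L i" | "x = (Tri c, 1)"
      proof -
        assume a: "mt E x \<Longrightarrow> thesis" "x = d \<Longrightarrow> thesis" "x = d' \<Longrightarrow> thesis" "x = (Tri c, 0) \<Longrightarrow> thesis"
          "x = (Tri c, 2) \<Longrightarrow> thesis" 
          "\<exists>i<length L. x = hd' L i \<Longrightarrow> thesis" "x = (Tri c, 1) \<Longrightarrow> thesis"
        from h show thesis
        proof
          assume "mt E' x" then show thesis using mtE' a by blast
        next
          assume "\<exists>i<length L'. x = hd' L' i"
          then obtain i where i: "i < length L'" "x = hd' L' i" by auto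
          then show thesis using hdL'[OF i(1)] a ox_lt[OF i(1)] by (auto split: if_splits)
        qed
      qed
      then show "mt E' (rot x) \<or> (\<exists>i<length L'. rot x = hd' L' i)"
      proof cases
        case 1 then show ?thesis using oldc t by blast
      next
        case 2 then show ?thesis using oldc t hdk k by (metis Suc_lessD)
      next
        case 3 then show ?thesis using oldc t hdk k by metis
      next
        case 4 then show ?thesis using hdL'[of k] k len by (intro disjI2 exI[of _ k]) auto
      next
        case 5 then show ?thesis using mtE' by simp
      next
        case 6 then show ?thesis using oldc t by blast
      next
        case 7 then show ?thesis using mtE' by simp
      qed
    qed
    show "\<forall>i<length L'. sv L' i \<in> {-1, 0, 1}"
      using svL' stv tr ox_lt by auto
    show "\<forall>(a, b)\<in>E'. \<not> is_cp (fst a)"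
    proof -
      have "\<not> is_cp (fst d)" "\<not> is_cp (fst d')" using hfr hdk k by (metis Suc_lessD)+
      then show ?thesis using ncp unfolding E'_def by auto
    qed
    have v': "\<forall>x. mt E' x \<longrightarrow> valid x"
    proof (intro allI impI)
      fix x assume "mt E' x"
      then consider "mt E x" | "x = d" | "x = d'" | "x = (Tri c, 0)" | "x = (Tri c, 2)"
        using mtE' by blast
      then show "valid x"
      proof cases
        case 1 then show ?thesis using fr by blast
      next
        case 2 then show ?thesis using hfr hdk k by (metis Suc_lessD)
      next
        case 3 then show ?thesis using hfr hdk k by metis
      qed auto
    qed
    have key: "6 \<le> card {y \<in> orb (phi E') (Tri c, 0). is_tri (fst y)}" if ag: "allgood E' (Tri c, 0)"
    proof -
      have rk: "region E L k" using reg k by simp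
      have cyc: "(phi E' ^^ Suc 0) (hd' L (Suc k)) = (Tri c, 0)" using hdk ph3 by simp
      have nr: "\<forall>q. 0 < q \<longrightarrow> q \<le> 0 \<longrightarrow> (phi E' ^^ q) (hd' L (Suc k)) \<noteq> (Tri c, 0)" by simp
      have old: "\<forall>y. mt E y \<longrightarrow> y \<noteq> (Tri c, 0)" using nmE by blast
      have ne: "hd' L (Suc k) \<noteq> (Tri c, 0)" using hdk dT by auto
      have ph2': "phi E' (Tri c, 0) = rot (hd' L k)" using ph2 hdk by simp
      note rcl = region_close[OF rk sub u' fin' v' ag ph2' cyc nr old ne]
      have "5 \<le> gf (sg L k = sg L (Suc k)) (sv L k - sv L (Suc k))"
        using gfY_close[OF tr] sgk by simp
      then show ?thesis using rcl by simp
    qed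
    show "closed_good E'"
    proof (rule closed_good_step[OF cg sub u' fin'])
      fix x assume m': "mt E' x" and nm: "\<not> mt E x" and ag: "allgood E' x"
      have agk: "mt E' ((phi E' ^^ n) x) \<and> tc (fst ((phi E' ^^ n) x))" for n
        using ag unfolding allgood_def by blast
      from m' nm consider "x = d" | "x = d'" | "x = (Tri c, 0)" | "x = (Tri c, 2)"
        using mtE' by blast
      then show "6 \<le> card {y \<in> orb (phi E') x. is_tri (fst y)}"
      proof cases
        case 1
        then have False using agk[of 1] ph1 mtE' nmE dT by auto
        then show ?thesis ..
      next
        case 2
        show ?thesis
          by (rule good_shift[OF ag fin', of 1]) (use key 2 ph3 in simp)
      next
        case 3 then show ?thesis using key ag by simp
      next
        case 4
        have False
        proof (rule region_stop[OF _ sub u' ag])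
          show "region E L (Suc k)" using reg k by simp
          show "phi E' x = rot (hd' L (Suc k))" using 4 ph4 hdk by simp
          show "\<not> mt E' (hd' L (Suc (Suc k)))" if "Suc (Suc k) < length L"
            using old_unm[OF that] by simp
        qed
        then show ?thesis ..
      qed
    qed
    show "\<forall>i<length L'. region E' L' i"
    proof (intro allI impI)
      fix i assume i: "i < length L'"
      consider "Suc i < k" | "Suc i = k" | "i = k" | "k < i" by linarith
      then show "region E' L' i"
      proof cases
        case 1
        show ?thesis
          by (rule region_transfer[OF _ sub u']) (use reg i 1 nlt len k in auto)
      next
        case 2
        show ?thesis
        proof (rule region_extend[OF _ _ sub u'])
          show "region E L i" using reg i len by simp
          show "Suc i < length L" using 2 k by simp
          show "mt E' (hd' L (Suc i))" using 2 hdk mtE' by simp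
          show "phi E' (hd' L (Suc i)) = hd' L' (Suc i)" using 2 hdk ph1 hdL'[of k] k len by simp
          show "is_tri (fst (hd' L' (Suc i)))" using 2 hdL'[of k] k len by simp
          show "L' ! i = L ! i" using 2 nlt by simp
          show "Suc i < length L'" using 2 k len by simp
          have "sv L i \<in> {-1, 0, 1}" using stv i len by simp
          then show "gf (sg L' i = sg L' (Suc i)) (sv L' i - sv L' (Suc i))
              \<le> gf (sg L i = sg L (Suc i)) (sv L i - sv L (Suc i)) + 1"
            using gfY_left[OF _ tr, of "sv L i" "sg L i" s] 2 sgL'[OF i] sgL'[of k] svL'[OF i] svL'[of k] k len sgk
            unfolding ox_def by simp
        qed
      next
        case 3
        show ?thesis
        proof (rule region_prefix[OF _ sub u'])
          show "region E L (Suc k)" using reg k by simp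
          show "phi E' (rot (hd' L' i)) = rot (hd' L (Suc k))" using 3 hdL'[OF i] ph4 hdk by (simp add: numeral_2_eq_2)
          show "mt E' (rot (hd' L' i))" using 3 hdL'[OF i] mtE' by simp
          show "is_tri (fst (rot (hd' L' i)))" using 3 hdL'[OF i] by simp
          show "Suc i < length L' \<and> L' ! Suc i = L ! Suc (Suc k)" if "Suc (Suc k) < length L"
            using 3 that len ngt by simp
          assume a: "Suc (Suc k) < length L"
          have a': "Suc k < length L'" using a len by simp
          have "sv L (Suc (Suc k)) \<in> {-1, 0, 1}" using stv a by blast
          then show "gf (sg L' i = sg L' (Suc i)) (sv L' i - sv L' (Suc i))
              \<le> gf (sg L (Suc k) = sg L (Suc (Suc k))) (sv L (Suc k) - sv L (Suc (Suc k))) + 1"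
            using gfY_right[OF _ tr, of "sv L (Suc (Suc k))" s "sg L (Suc (Suc k))"] 3 sgL'[OF i] sgL'[OF a'] svL'[OF i] svL'[OF a'] sgk
            unfolding ox_def by simp
        qed
      next
        case 4
        show ?thesis
        proof (rule region_transfer[OF _ sub u'])
          show "region E L (Suc i)" using reg i len by simp
          show "L' ! i = L ! Suc i" using 4 i ngt by simp
          show "Suc i < length L' \<and> L' ! Suc i = L ! Suc (Suc i)" if "Suc (Suc i) < length L"
            using 4 that len ngt by simp
        qed
      qed
    qed
  qed
qed



lemma gfC_merge:
  "a \<in> {-1,0,1} \<Longrightarrow> b \<in> {-1,0,1::int} \<Longrightarrow> s' \<noteq> (s::bool) \<Longrightarrow>
   gf (t = u) (a - b) \<le> gf (t = s) (a - 1) + gf (s' = u) (-1 - b)"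
  unfolding gf_def by (cases t; cases s; cases u; auto split: if_splits)

lemma inv_Cup:
  assumes I: "Inv L c E" and k: "Suc k < length L"
    and Lk: "L ! k = (s, 1, d)" and Lk1: "L ! Suc k = (s', -1, d')" and ss: "s' \<noteq> s"
  shows "Inv (take k L @ drop (Suc (Suc k)) L) (Suc c) (E \<union> {(d, (Cp c, 0)), (d', (Cp c, 1))})"
proof -
  define L' where "L' = take k L @ drop (Suc (Suc k)) L"
  define E' where "E' = E \<union> {(d, (Cp c, 0)), (d', (Cp c, 1))}"
  note I' = I[unfolded Inv_def]
  have fin: "finite E" using I' by blast
  have u: "uniq E" using I' by blast
  have unm: "\<forall>i<length L. \<not> mt E (hd' L i)" using I' by blast
  have dist: "\<forall>i<length L. \<forall>j<length L. hd' L i = hd' L j \<longrightarrow> i = j" using I' by blast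
  have fr: "\<forall>x. mt E x \<longrightarrow> fresh c x \<and> valid x" using I' by blast
  have hfr: "\<forall>i<length L. fresh c (hd' L i) \<and> valid (hd' L i) \<and> \<not> is_cp (fst (hd' L i))" using I' by blast
  have rc: "\<forall>x. (mt E x \<or> (\<exists>i<length L. x = hd' L i)) \<longrightarrow> tc (fst x) \<longrightarrow> mt E (rot x) \<or> (\<exists>i<length L. rot x = hd' L i)"
    using I' by blast
  have stv: "\<forall>i<length L. sv L i \<in> {-1, 0, 1}" using I' by blast
  have ncp: "\<forall>(a, b)\<in>E. \<not> is_cp (fst a)" using I' by blast
  have reg: "\<forall>i<length L. region E L i" using I' by blast
  have cg: "closed_good E" using I' by blast

  have len: "length L' = length L - 2" unfolding L'_def using k by simp
  have nlt: "i < k \<Longrightarrow> L' ! i = L ! i" for i unfolding L'_def using k by (simp add: nth_append)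
  have ngt: "k \<le> i \<Longrightarrow> i < length L' \<Longrightarrow> L' ! i = L ! Suc (Suc i)" for i
  proof -
    assume a: "k \<le> i" "i < length L'"
    have "(take k L @ drop (Suc (Suc k)) L) ! i = (drop (Suc (Suc k)) L) ! (i - k)"
      using a k by (simp add: nth_append)
    also have "\<dots> = L ! Suc (Suc i)" using a len k by simp
    finally show ?thesis unfolding L'_def .
  qed
  have hdk: "hd' L k = d" "hd' L (Suc k) = d'" using Lk Lk1 by (simp_all add: hd'_def)
  have sgk: "sg L k = s" "sg L (Suc k) = s'" "sv L k = 1" "sv L (Suc k) = -1" using Lk Lk1 by (simp_all add: sg_def sv_def)
  define ox where "ox i = (if i < k then i else Suc (Suc i))" for i
  have ox_lt: "i < length L' \<Longrightarrow> ox i < length L" for i unfolding ox_def using len k by auto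
  have LL': "L' ! i = L ! ox i" if "i < length L'" for i
    using that nlt ngt unfolding ox_def by auto
  have hdL': "hd' L' i = hd' L (ox i)" if "i < length L'" for i
    using LL'[OF that] by (simp add: hd'_def)
  have sgL': "sg L' i = sg L (ox i)" if "i < length L'" for i
    using LL'[OF that] by (simp add: sg_def)
  have svL': "sv L' i = sv L (ox i)" if "i < length L'" for i
    using LL'[OF that] by (simp add: sv_def)
  have ox_ne: "ox i \<noteq> k" "ox i \<noteq> Suc k" for i unfolding ox_def by auto
  have ox_inj: "ox i = ox i' \<Longrightarrow> i = i'" for i i' unfolding ox_def by (auto split: if_splits)
  have ox_surj: "\<exists>i<length L'. i' = ox i" if "i' < length L" "i' \<noteq> k" "i' \<noteq> Suc k" for i'
  proof (cases "i' < k")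
    case True then show ?thesis using that len k unfolding ox_def by (intro exI[of _ i']) auto
  next
    case False then show ?thesis using that len k unfolding ox_def by (intro exI[of _ "i' - 2"]) auto
  qed

  have oldTri: "fst x \<noteq> Tri c \<and> fst x \<noteq> Cp c" if "mt E x \<or> (\<exists>i<length L. x = hd' L i)" for x
  proof -
    have "fresh c x" using that fr hfr by blast
    then show ?thesis using fresh_ne[of c x c] by auto
  qed
  have nmE: "\<not> mt E (Cp c, a)" for a using oldTri by force
  have dd: "d \<noteq> d'" using dist k hdk by (metis Suc_lessD n_not_Suc_n)
  have dT: "fst d \<noteq> Cp c" "fst d' \<noteq> Cp c"
    using oldTri[of d] oldTri[of d'] hdk k by (metis Suc_lessD)+
  have nmd: "\<not> mt E d" "\<not> mt E d'" using unm hdk k by (metis Suc_lessD)+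

  define E1 where "E1 = insert (d', (Cp c, 1)) E"
  have E'eq: "E' = insert (d, (Cp c, 0)) E1" unfolding E'_def E1_def by auto
  have u1: "uniq E1" unfolding E1_def by (rule uniq_add[OF u nmd(2) nmE]) (use dT in auto)
  have u': "uniq E'" unfolding E'eq
    by (rule uniq_add[OF u1]) (use nmd dT nmE dd in \<open>auto simp: E1_def mt_insert\<close>)
  have mtE': "mt E' x \<longleftrightarrow> mt E x \<or> x = d \<or> x = (Cp c, 0) \<or> x = d' \<or> x = (Cp c, 1)" for x
    unfolding E'eq E1_def mt_insert by blast
  have sub: "E \<subseteq> E'" unfolding E'_def by blast
  have fin': "finite E'" unfolding E'_def using fin by simp
  have "phi E' d = rot (Cp c, 0)" by (rule phi_adj[OF u']) (simp add: adj_def E'_def)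
  then have ph1: "phi E' d = (Cp c, 1)" by simp
  have ph2: "phi E' (Cp c, 0) = rot d" by (rule phi_adj[OF u']) (simp add: adj_def E'_def)
  have "phi E' d' = rot (Cp c, 1)" by (rule phi_adj[OF u']) (simp add: adj_def E'_def)
  then have ph3: "phi E' d' = (Cp c, 0)" by simp
  have ph4: "phi E' (Cp c, 1) = rot d'" by (rule phi_adj[OF u']) (simp add: adj_def E'_def)

  have old_unm: "\<not> mt E' (hd' L i)" if "i < length L" "i \<noteq> k" "i \<noteq> Suc k" for i
  proof -
    have "hd' L i \<noteq> d" "hd' L i \<noteq> d'" using dist that hdk k by (metis Suc_lessD)+
    moreover have "fst (hd' L i) \<noteq> Cp c" using oldTri that(1) by blast
    ultimately show ?thesis using unm that(1) mtE' by auto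
  qed

  show ?thesis
    unfolding Inv_def L'_def[symmetric] E'_def[symmetric]
  proof (intro conjI)
    show "finite E'" by (rule fin')
    show "uniq E'" by (rule u')
    show "\<forall>i<length L'. \<not> mt E' (hd' L' i)"
      using hdL' old_unm ox_lt ox_ne by simp
    show "\<forall>i<length L'. \<forall>j<length L'. hd' L' i = hd' L' j \<longrightarrow> i = j"
      using hdL' dist ox_lt ox_inj by metis
    show "\<forall>x. mt E' x \<longrightarrow> fresh (Suc c) x \<and> valid x"
    proof (intro allI impI)
      fix x assume "mt E' x"
      then consider "mt E x" | "x = d" | "x = d'" | "x = (Cp c, 0)" | "x = (Cp c, 1)"
        using mtE' by blast
      then show "fresh (Suc c) x \<and> valid x"
      proof cases
        case 1 then show ?thesis using fr fresh_mono by fastforce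
      next
        case 2 then show ?thesis using hfr hdk k fresh_mono by (metis Suc_lessD le_SucI le_refl)
      next
        case 3 then show ?thesis using hfr hdk k fresh_mono by (metis le_SucI le_refl)
      qed auto
    qed
    show "\<forall>i<length L'. fresh (Suc c) (hd' L' i) \<and> valid (hd' L' i) \<and> \<not> is_cp (fst (hd' L' i))"
    proof (intro allI impI)
      fix i assume i: "i < length L'"
      show "fresh (Suc c) (hd' L' i) \<and> valid (hd' L' i) \<and> \<not> is_cp (fst (hd' L' i))"
        using hdL'[OF i] hfr ox_lt[OF i] fresh_mono[of c "hd' L (ox i)" "Suc c"] by auto
    qed
    show "\<forall>x. (mt E' x \<or> (\<exists>i<length L'. x = hd' L' i)) \<longrightarrow> tc (fst x) \<longrightarrow> mt E' (rot x) \<or> (\<exists>i<length L'. rot x = hd' L' i)"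
    proof (intro allI impI)
      fix x assume h: "mt E' x \<or> (\<exists>i<length L'. x = hd' L' i)" and t: "tc (fst x)"
      have oldc: "mt E' (rot y) \<or> (\<exists>i<length L'. rot y = hd' L' i)"
        if "mt E y \<or> (\<exists>i<length L. y = hd' L i)" "tc (fst y)" for y
      proof -
        from rc that have "mt E (rot y) \<or> (\<exists>i<length L. rot y = hd' L i)" by blast
        then show ?thesis
        proof
          assume "mt E (rot y)" then show ?thesis using sub mt_mono by blast
        next
          assume "\<exists>i<length L. rot y = hd' L i"
          then obtain i where i: "i < length L" "rot y = hd' L i" by blast
          show ?thesis
          proof (cases "i = k \<or> i = Suc k")
            case True then show ?thesis using i hdk mtE' by auto
          next
            case False
            then obtain i2 where i2: "i2 < length L'" "i = ox i2" using ox_surj i by blast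
            then show ?thesis using i hdL'[OF i2(1)] by auto
          qed
        qed
      qed
      from h consider "mt E x" | "x = d" | "x = d'" | "x = (Cp c, 0)" | "x = (Cp c, 1)"
        | "\<exists>i<length L. x = hd' L i"
      proof -
        assume a: "mt E x \<Longrightarrow> thesis" "x = d \<Longrightarrow> thesis" "x = d' \<Longrightarrow> thesis" "x = (Cp c, 0) \<Longrightarrow> thesis"
          "x = (Cp c, 1) \<Longrightarrow> thesis" "\<exists>i<length L. x = hd' L i \<Longrightarrow> thesis"
        from h show thesis
        proof
          assume "mt E' x" then show thesis using mtE' a by blast
        next
          assume "\<exists>i<length L'. x = hd' L' i"
          then obtain i where i: "i < length L'" "x = hd' L' i" by auto
          then show thesis using hdL'[OF i(1)] a ox_lt[OF i(1)] by auto
        qed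
      qed
      then show "mt E' (rot x) \<or> (\<exists>i<length L'. rot x = hd' L' i)"
      proof cases
        case 1 then show ?thesis using oldc t by blast
      next
        case 2 then show ?thesis using oldc t hdk k by (metis Suc_lessD)
      next
        case 3 then show ?thesis using oldc t hdk k by metis
      next
        case 4 then show ?thesis using mtE' by simp
      next
        case 5 then show ?thesis using mtE' by simp
      next
        case 6 then show ?thesis using oldc t by blast
      qed
    qed
    show "\<forall>i<length L'. sv L' i \<in> {-1, 0, 1}"
      using svL' stv ox_lt by auto
    show "\<forall>(a, b)\<in>E'. \<not> is_cp (fst a)"
    proof -
      have "\<not> is_cp (fst d)" "\<not> is_cp (fst d')" using hfr hdk k by (metis Suc_lessD)+
      then show ?thesis using ncp unfolding E'_def by auto
    qed
    have v': "\<forall>x. mt E' x \<longrightarrow> valid x"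
    proof (intro allI impI)
      fix x assume "mt E' x"
      then consider "mt E x" | "x = d" | "x = d'" | "x = (Cp c, 0)" | "x = (Cp c, 1)"
        using mtE' by blast
      then show "valid x"
      proof cases
        case 1 then show ?thesis using fr by blast
      next
        case 2 then show ?thesis using hfr hdk k by (metis Suc_lessD)
      next
        case 3 then show ?thesis using hfr hdk k by metis
      qed auto
    qed
    have key: "6 \<le> card {y \<in> orb (phi E') (Cp c, 0). is_tri (fst y)}" if ag: "allgood E' (Cp c, 0)"
    proof -
      have rk: "region E L k" using reg k by simp
      have cyc: "(phi E' ^^ Suc 0) (hd' L (Suc k)) = (Cp c, 0)" using hdk ph3 by simp
      have nr: "\<forall>q. 0 < q \<longrightarrow> q \<le> 0 \<longrightarrow> (phi E' ^^ q) (hd' L (Suc k)) \<noteq> (Cp c, 0)" by simp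
      have old: "\<forall>y. mt E y \<longrightarrow> y \<noteq> (Cp c, 0)" using nmE by blast
      have ne: "hd' L (Suc k) \<noteq> (Cp c, 0)" using hdk dT by auto
      have ph2': "phi E' (Cp c, 0) = rot (hd' L k)" using ph2 hdk by simp
      note rcl = region_close[OF rk sub u' fin' v' ag ph2' cyc nr old ne]
      have "6 \<le> gf (sg L k = sg L (Suc k)) (sv L k - sv L (Suc k))"
        using sgk ss by (simp add: gf_def)
      then show ?thesis using rcl by simp
    qed
    have stop1: False if ag: "allgood E' (Cp c, 1)"
    proof (rule region_stop[OF _ sub u' ag])
      show "region E L (Suc k)" using reg k by simp
      show "phi E' (Cp c, 1) = rot (hd' L (Suc k))" using ph4 hdk by simp
      show "\<not> mt E' (hd' L (Suc (Suc k)))" if "Suc (Suc k) < length L"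
        using old_unm[OF that] by simp
    qed
    show "closed_good E'"
    proof (rule closed_good_step[OF cg sub u' fin'])
      fix x assume m': "mt E' x" and nm: "\<not> mt E x" and ag: "allgood E' x"
      from m' nm consider "x = d" | "x = d'" | "x = (Cp c, 0)" | "x = (Cp c, 1)"
        using mtE' by blast
      then show "6 \<le> card {y \<in> orb (phi E') x. is_tri (fst y)}"
      proof cases
        case 1
        have "allgood E' ((phi E' ^^ 1) x)" by (rule allgood_shift[OF ag])
        then have False using stop1 1 ph1 by simp
        then show ?thesis ..
      next
        case 2
        show ?thesis
          by (rule good_shift[OF ag fin', of 1]) (use key 2 ph3 in simp)
      next
        case 3 then show ?thesis using key ag by simp
      next
        case 4 then have False using stop1 ag by simp
        then show ?thesis ..
      qed
    qed
    show "\<forall>i<length L'. region E' L' i"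
    proof (intro allI impI)
      fix i assume i: "i < length L'"
      consider "Suc i < k" | "Suc i = k" | "k \<le> i" by linarith
      then show "region E' L' i"
      proof cases
        case 1
        show ?thesis
          by (rule region_transfer[OF _ sub u']) (use reg i 1 nlt len k in auto)
      next
        case 2
        show ?thesis
        proof (rule region_merge[OF _ _ _ sub u'])
          show "region E L i" using reg i len by simp
          show "region E L (Suc (Suc i))" using reg 2 k by simp
          show "Suc (Suc i) < length L" using 2 k by simp
          show "mt E' (hd' L (Suc i))" using 2 hdk mtE' by simp
          show "phi E' (hd' L (Suc i)) = (Cp c, 1)" using 2 hdk ph1 by simp
          show "mt E' (Cp c, 1)" using mtE' by simp
          show "\<not> is_tri (fst (Cp c, 1))" by simp
          show "phi E' (Cp c, 1) = rot (hd' L (Suc (Suc i)))" using 2 hdk ph4 by simp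
          show "L' ! i = L ! i" using 2 nlt by simp
          show "Suc i < length L' \<and> L' ! Suc i = L ! Suc (Suc (Suc i))" if "Suc (Suc (Suc i)) < length L"
            using 2 that len ngt by simp
          assume a: "Suc (Suc (Suc i)) < length L"
          have a': "Suc i < length L'" using a len by simp
          have "sv L i \<in> {-1, 0, 1}" "sv L (Suc (Suc (Suc i))) \<in> {-1, 0, 1}" using stv a by auto
          then show "gf (sg L' i = sg L' (Suc i)) (sv L' i - sv L' (Suc i)) \<le>
             gf (sg L i = sg L (Suc i)) (sv L i - sv L (Suc i)) +
             gf (sg L (Suc (Suc i)) = sg L (Suc (Suc (Suc i)))) (sv L (Suc (Suc i)) - sv L (Suc (Suc (Suc i))))"
            using gfC_merge[of "sv L i" "sv L (Suc (Suc (Suc i)))" s' s "sg L i" "sg L (Suc (Suc (Suc i)))"] ss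
              2 sgL'[OF i] sgL'[OF a'] svL'[OF i] svL'[OF a'] sgk
            unfolding ox_def by simp
        qed
      next
        case 3
        show ?thesis
        proof (rule region_transfer[OF _ sub u'])
          show "region E L (Suc (Suc i))" using reg i len by simp
          show "L' ! i = L ! Suc (Suc i)" using 3 i ngt by simp
          show "Suc i < length L' \<and> L' ! Suc i = L ! Suc (Suc (Suc i))" if "Suc (Suc (Suc i)) < length L"
            using 3 that len ngt by simp
        qed
      qed
    qed
  qed
qed



lemma fst_rot: "fst (rot z) = fst z"
  by (cases z; rename_tac v i; case_tac v) auto

lemma inv_init:
  assumes "length J = length S" "set J \<subseteq> {-1, 0, 1}"
  shows "Inv (map (\<lambda>i. (S ! i, J ! i, (Top i, 0))) [0..<length S]) 0 {}"
proof -
  let ?L = "map (\<lambda>i. (S ! i, J ! i, (Top i, 0))) [0..<length S]"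
  have h: "hd' ?L i = (Top i, 0)" if "i < length S" for i using that by (simp add: hd'_def)
  have sv: "sv ?L i = J ! i" if "i < length S" for i using that by (simp add: sv_def)
  have mt0: "\<not> mt {} x" for x by (simp add: mt_def adj_def)
  have reg: "region {} ?L i" if "i < length S" for i
    unfolding region_def h[OF that] by (intro exI[of _ 0]) (simp add: tc_def)
  have cg: "closed_good {}" unfolding closed_good_def allgood_def using mt0 by blast
  have "J ! i \<in> {-1, 0, 1}" if "i < length S" for i using assms that nth_mem by (metis subsetD)
  then show ?thesis unfolding Inv_def using h sv mt0 reg cg
    by (auto simp: uniq_def adj_def tc_def)
qed

lemma inv_step: "grow_step st st' \<Longrightarrow> Inv (fst st) (fst (snd st)) (snd (snd st)) \<Longrightarrow> Inv (fst st') (fst (snd st')) (snd (snd st'))"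
proof (induction rule: grow_step.induct)
  case (H k L s j d s' j' d' nj nj' c E)
  then show ?case using inv_H[of L c E k s j d s' j' d' nj nj'] by simp
next
  case (Cup k L s d s' d' c E)
  then show ?case using inv_Cup[of L c E k s d s' d'] by simp
next
  case (Y k L s j d j' d' nj c E)
  then show ?case using inv_Y[of L c E k s j d j' d' nj] by simp
qed

lemma inv_reach:
  assumes "length J = length S" "set J \<subseteq> {-1, 0, 1}" "grow_step\<^sup>*\<^sup>* (grow_init S J) st"
  shows "Inv (fst st) (fst (snd st)) (snd (snd st))"
  using assms(3)
proof (induction rule: rtranclp_induct)
  case base then show ?case using inv_init[OF assms(1,2)] by (simp add: grow_init_def)
next
  case (step y z) then show ?case using inv_step by blast
qed

lemma bnd_ntc: "(a, b) \<in> boundary_arcs n m \<Longrightarrow> \<not> tc (fst a) \<and> \<not> tc (fst b)"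
  unfolding boundary_arcs_def by (auto simp: tc_def split: if_splits)


lemma final_ok:
  assumes I: "Inv L c E"
  shows "non_elliptic (final_web n (L, c, E))"
proof -
  define W where "W = final_web n (L, c, E)"
  define B where "B = {(snd (snd (L ! i)), (Bot i, 0::nat)) | i. i < length L}"
  have W: "W = E \<union> B \<union> boundary_arcs n (length L)" unfolding W_def B_def final_web_def by simp
  note I' = I[unfolded Inv_def]
  have u: "uniq E" using I' by blast
  have unm: "\<forall>i<length L. \<not> mt E (hd' L i)" using I' by blast
  have dist: "\<forall>i<length L. \<forall>j<length L. hd' L i = hd' L j \<longrightarrow> i = j" using I' by blast
  have hfr: "\<forall>i<length L. fresh c (hd' L i) \<and> valid (hd' L i) \<and> \<not> is_cp (fst (hd' L i))" using I' by blast
  have rc: "\<forall>x. (mt E x \<or> (\<exists>i<length L. x = hd' L i)) \<longrightarrow> tc (fst x) \<longrightarrow> mt E (rot x) \<or> (\<exists>i<length L. rot x = hd' L i)"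
    using I' by blast
  have ncp: "\<forall>(a, b)\<in>E. \<not> is_cp (fst a)" using I' by blast
  have cg: "closed_good E" using I' by blast
  have Bmem: "(a, b) \<in> B \<longleftrightarrow> (\<exists>i<length L. a = hd' L i \<and> b = (Bot i, 0))" for a b
    unfolding B_def hd'_def by auto
  have tcBot: "\<not> tc (Bot i)" for i by (simp add: tc_def)

  have alphaE: "alpha W x = alpha E x" if "mt E x" "tc (fst x)" for x
  proof -
    have "(\<lambda>e. (x, e) \<in> W \<or> (e, x) \<in> W) = (\<lambda>e. (x, e) \<in> E \<or> (e, x) \<in> E)"
    proof (rule ext)
      fix e
      have n1: "(x, e) \<notin> B" using Bmem[of x e] unm that(1) by blast
      have n2: "(e, x) \<notin> B" using Bmem[of e x] that(2) by (auto simp: tc_def)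
      have n3: "(x, e) \<notin> boundary_arcs n (length L)" using bnd_ntc[of x e] that(2) by blast
      have n4: "(e, x) \<notin> boundary_arcs n (length L)" using bnd_ntc[of e x] that(2) by blast
      show "((x, e) \<in> W \<or> (e, x) \<in> W) = ((x, e) \<in> E \<or> (e, x) \<in> E)"
        using n1 n2 n3 n4 unfolding W by blast
    qed
    then show ?thesis unfolding alpha_def by (simp only:)
  qed
  have phiE: "phi W x = phi E x" if "mt E x" "tc (fst x)" for x
    using alphaE[OF that] by (simp add: phi_def)
  have phiH: "phi W (hd' L i) = (Bot i, 1)" if "i < length L" "tc (fst (hd' L i))" for i
  proof -
    have "(\<lambda>e. (hd' L i, e) \<in> W \<or> (e, hd' L i) \<in> W) = (\<lambda>e. e = (Bot i, 0))"
    proof (rule ext)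
      fix e
      have n1: "(hd' L i, e) \<notin> E" "(e, hd' L i) \<notin> E" using unm that(1) unfolding mt_def adj_def by blast+
      have n2: "(hd' L i, e) \<in> B \<longleftrightarrow> e = (Bot i, 0)"
      proof
        assume "(hd' L i, e) \<in> B"
        then obtain i' where i': "i' < length L" "hd' L i = hd' L i'" "e = (Bot i', 0)" using Bmem by blast
        then have "i = i'" using dist that(1) by blast
        then show "e = (Bot i, 0)" using i' by simp
      next
        assume "e = (Bot i, 0)"
        then show "(hd' L i, e) \<in> B" using Bmem that(1) by blast
      qed
      have n3: "(e, hd' L i) \<notin> B"
      proof
        assume "(e, hd' L i) \<in> B"
        then obtain i' where "hd' L i = (Bot i', 0)" using Bmem by blast
        then show False using that(2) by (simp add: tc_def)
      qed
      have n4: "(hd' L i, e) \<notin> boundary_arcs n (length L)" using bnd_ntc[of "hd' L i" e] that(2) by blast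
      have n5: "(e, hd' L i) \<notin> boundary_arcs n (length L)" using bnd_ntc[of e "hd' L i"] that(2) by blast
      show "((hd' L i, e) \<in> W \<or> (e, hd' L i) \<in> W) = (e = (Bot i, 0))"
        using n1 n2 n3 n4 n5 unfolding W by blast
    qed
    then have "alpha W (hd' L i) = (Bot i, 0)" unfolding alpha_def by (simp only: the_eq_trivial)
    then show ?thesis by (simp add: phi_def)
  qed
  have inW: "mt E x \<or> (\<exists>i<length L. x = hd' L i)" if "x \<in> web_darts W" "tc (fst x)" for x
  proof -
    from that(1) consider y where "(x, y) \<in> W" | y where "(y, x) \<in> W" unfolding web_darts_def by force
    then show ?thesis
    proof cases
      case (1 y)
      then consider "(x, y) \<in> E" | "(x, y) \<in> B" | "(x, y) \<in> boundary_arcs n (length L)" unfolding W by blast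
      then show ?thesis
      proof cases
        case 1 then show ?thesis unfolding mt_def adj_def by blast
      next
        case 2 then show ?thesis using Bmem by blast
      next
        case 3 then show ?thesis using bnd_ntc that(2) by blast
      qed
    next
      case (2 y)
      then consider "(y, x) \<in> E" | "(y, x) \<in> B" | "(y, x) \<in> boundary_arcs n (length L)" unfolding W by blast
      then show ?thesis
      proof cases
        case 1 then show ?thesis unfolding mt_def adj_def by blast
      next
        case 2 then show ?thesis using Bmem[of y x] that(2) by (auto simp: tc_def)
      next
        case 3 then show ?thesis using bnd_ntc that(2) by blast
      qed
    qed
  qed
  show ?thesis unfolding non_elliptic_def W_def[symmetric]
  proof (intro conjI ballI impI)
    show "no_closed_loops W" unfolding no_closed_loops_def
    proof
      fix v assume "v \<in> fst ` web_darts W"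
      then obtain x where x: "x \<in> web_darts W" "fst x = v" by blast
      show "\<exists>w. (web_adj W)\<^sup>*\<^sup>* v w \<and> \<not> is_cp w"
      proof (cases "is_cp v")
        case False then show ?thesis by blast
      next
        case True
        then have t: "tc (fst x)" using x by (simp add: tc_def)
        from x(1) consider y where "(x, y) \<in> W" | y where "(y, x) \<in> W" unfolding web_darts_def by force
        then show ?thesis
        proof cases
          case (1 y)
          then consider "(x, y) \<in> E" | "(x, y) \<in> B" | "(x, y) \<in> boundary_arcs n (length L)" unfolding W by blast
          then have False
          proof cases
            case 1 then show False using ncp True x by fastforce
          next
            case 2 then show False using Bmem hfr True x by fastforce
          next
            case 3 then show False using bnd_ntc t by blast
          qed
          then show ?thesis ..
        next
          case (2 y)
          then consider "(y, x) \<in> E" | "(y, x) \<in> B" | "(y, x) \<in> boundary_arcs n (length L)" unfolding W by blast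
          then show ?thesis
          proof cases
            case 1
            then have ny: "\<not> is_cp (fst y)" using ncp by fastforce
            have xe: "x = (v, snd x)" using x(2) by (cases x) simp
            have "((fst y, snd y), (v, snd x)) \<in> W" using 1 xe unfolding W by (metis UnI1 prod.collapse)
            then have "web_adj W v (fst y)" unfolding web_adj_def by blast
            then show ?thesis using ny by blast
          next
            case 2 then have False using Bmem[of y x] t by (auto simp: tc_def)
            then show ?thesis ..
          next
            case 3 then have False using bnd_ntc t by blast
            then show ?thesis ..
          qed
        qed
      qed
    qed
  next
    fix d assume dW: "d \<in> web_darts W" and intf: "internal_face (face W d)"
    have fo: "face W d = orb (phi W) d" unfolding face_def orb_def ..
    have tk: "tc (fst ((phi W ^^ k) d))" for k
      using intf unfolding internal_face_def face_def tc_def by blast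
    have hang: False if "(phi W ^^ k) d = hd' L i" "i < length L" for k i
    proof -
      have "tc (fst (hd' L i))" using tk[of k] that by simp
      then have "(phi W ^^ Suc k) d = (Bot i, 1)" using phiH[OF that(2)] that(1) by simp
      then show False using tk[of "Suc k"] by (simp add: tc_def)
    qed
    have cl: "(phi W ^^ k) d = (phi E ^^ k) d \<and> mt E ((phi E ^^ k) d)" for k
    proof (induction k)
      case 0
      have "mt E d \<or> (\<exists>i<length L. d = hd' L i)" using inW[OF dW] tk[of 0] by simp
      then show ?case using hang[of 0] by auto
    next
      case (Suc k)
      let ?x = "(phi E ^^ k) d"
      have mx: "mt E ?x" and ex: "(phi W ^^ k) d = ?x" using Suc by auto
      have tx: "tc (fst ?x)" using tk[of k] ex by simp
      have e1: "(phi W ^^ Suc k) d = phi E ?x" using phiE[OF mx tx] ex by simp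
      obtain z where z: "adj E ?x z" using mx unfolding mt_def by blast
      have az: "alpha E ?x = z" by (rule alpha_eq[OF u z])
      have pz: "phi E ?x = rot z" using az by (simp add: phi_def)
      have mz: "mt E z" using z unfolding mt_def by (meson adj_sym)
      have tz: "tc (fst z)" using tk[of "Suc k"] e1 pz fst_rot by metis
      have "mt E (rot z) \<or> (\<exists>i<length L. rot z = hd' L i)" using rc mz tz by blast
      then have "mt E (rot z)" using hang[of "Suc k"] e1 pz by metis
      then show ?case using e1 pz by simp
    qed
    have "allgood E d" unfolding allgood_def using cl tk by metis
    then have "6 \<le> card {y \<in> orb (phi E) d. is_tri (fst y)}" using cg unfolding closed_good_def by blast
    moreover have "orb (phi W) d = orb (phi E) d" unfolding orb_def using cl by simp
    ultimately show "6 \<le> face_sides (face W d)" unfolding face_sides_def fo by simp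
  qed
qed


theorem lemma3:
  fixes S :: "bool list" and J :: "int list" and st :: gstate
  assumes "length J = length S"
    and "set J \<subseteq> {-1, 0, 1}"
    and "grow_step\<^sup>*\<^sup>* (grow_init S J) st"
    and "grow_terminal st"
  shows "non_elliptic (final_web (length S) st)"
proof -
  obtain L c E where st: "st = (L, c, E)" by (cases st)
  have "Inv L c E" using inv_reach[OF assms(1-3)] st by simp
  then show ?thesis using final_ok st by simp
qed

end
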